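(* In the setting of the context, the multiplication maps $A\otimes_kB\to C$, $a\otimes b\mapsto ab$, and $B\otimes_kA\to C$, $b\otimes a\mapsto ba$, are linear isomorphisms.
   Context: $k$ is a field; $C_R(S)=\{r\in R:rs=sr\ \forall s\in S\}$. $N\subseteq M$ is a strongly separable, irreducible extension of $k$-algebras: $C_M(N)=k1$ and there are an $N$-bimodule map $E:M\to N$ and $x_1,\dots,x_n,y_1,\dots,y_n\in M$ with $\sum_iE(mx_i)y_i=m=\sum_ix_iE(y_im)$ for all $m\in M$, $E(1)\neq0$, $\sum_ix_iy_i\neq0$; normalized so that $E(1)=1$, whence $\sum_ix_iy_i=\lambda^{-1}1$ with $0\neq\lambda\in k$. Basic construction: given $S\subseteq R$, an $S$-bimodule map $E_S:R\to S$ with $E_S(1)=1$ and $r_i,s_i\in R$ with $\sum_iE_S(rr_i)s_i=r=\sum_ir_iE_S(s_ir)$ and $\sum_ir_is_i=\lambda^{-1}1$, set $R_1=R\otimes_SR$ with product $(a\otimes b)(c\otimes d)=aE_S(bc)\otimes d$, unit $\sum_ir_i\otimes s_i$, $R\subseteq R_1$ via $r\mapsto\sum_irr_i\otimes s_i$, $e=1\otimes1$, $E_R:R_1\to R$, $a\otimes b\mapsto\lambda ab$; then $E_R$, $\lambda^{-1}r_i\otimes1$, $1\otimes s_i$ satisfy the same conditions with the same $\lambda$. From $(N\subseteq M,E)$ get $M_1,e_1,E_M$; from $(M\subseteq M_1,E_M)$ get $M_2,e_2,E_{M_1}$. Let $A=C_{M_1}(N)$, $B=C_{M_2}(M)$,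 $C=C_{M_2}(N)$ (so $A,B\subseteq C$). Depth 2 is assumed: $M_1$ is free as right $M$-module with basis in $A$, $M_2$ free as right $M_1$-module with basis in $B$. *)

theory Defs
  imports Main
begin

text \<open>All algebras of the tower N, M, M1, M2 are
realised as subalgebras (subsets) of one ambient k-algebra (M2 sits inside it).\<close>

definition k_algebra :: "('k::field \<Rightarrow> 'a::ring_1 \<Rightarrow> 'a) \<Rightarrow> bool" where
  "k_algebra sc \<longleftrightarrow>
     (\<forall>c x y. sc c (x + y) = sc c x + sc c y) \<and>
     (\<forall>c d x. sc (c + d) x = sc c x + sc d x) \<and>
     (\<forall>c d x. sc c (sc d x) = sc (c * d) x) \<and>
     (\<forall>x. sc 1 x = x) \<and>
     (\<forall>c x y. sc c (x * y) = sc c x * y \<and> sc c (x * y) = x * sc c y)"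

definition subalg :: "('k::field \<Rightarrow> 'a::ring_1 \<Rightarrow> 'a) \<Rightarrow> 'a set \<Rightarrow> bool" where
  "subalg sc X \<longleftrightarrow> 1 \<in> X \<and> (\<forall>x\<in>X. \<forall>y\<in>X. x + y \<in> X \<and> x * y \<in> X) \<and>
     (\<forall>c. \<forall>x\<in>X. sc c x \<in> X)"

definition cent :: "'a::ring_1 set \<Rightarrow> 'a set \<Rightarrow> 'a set" where
  "cent R X = {r \<in> R. \<forall>x\<in>X. r * x = x * r}"

definition scalars :: "('k::field \<Rightarrow> 'a::ring_1 \<Rightarrow> 'a) \<Rightarrow> 'a set" where
  "scalars sc = range (\<lambda>c. sc c 1)"

definition bimod_map :: "('k::field \<Rightarrow> 'a::ring_1 \<Rightarrow> 'a) \<Rightarrow> 'a set \<Rightarrow> 'a set \<Rightarrow> ('a \<Rightarrow> 'a) \<Rightarrow> bool" where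
  "bimod_map sc S R E \<longleftrightarrow>
     (\<forall>r\<in>R. E r \<in> S) \<and>
     (\<forall>r\<in>R. \<forall>r'\<in>R. E (r + r') = E r + E r') \<and>
     (\<forall>c. \<forall>r\<in>R. E (sc c r) = sc c (E r)) \<and>
     (\<forall>s\<in>S. \<forall>r\<in>R. \<forall>s'\<in>S. E (s * r * s') = s * E r * s')"

definition strongly_separable ::
  "('k::field \<Rightarrow> 'a::ring_1 \<Rightarrow> 'a) \<Rightarrow> 'a set \<Rightarrow> 'a set \<Rightarrow> ('a \<Rightarrow> 'a) \<Rightarrow> 'k \<Rightarrow>
   nat \<Rightarrow> (nat \<Rightarrow> 'a) \<Rightarrow> (nat \<Rightarrow> 'a) \<Rightarrow> bool" where
  "strongly_separable sc S R E lam n x y \<longleftrightarrow>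
     bimod_map sc S R E \<and>
     (\<forall>i<n. x i \<in> R \<and> y i \<in> R) \<and>
     (\<forall>m\<in>R. (\<Sum>i<n. E (m * x i) * y i) = m \<and> (\<Sum>i<n. x i * E (y i * m)) = m) \<and>
     E 1 = 1 \<and> lam \<noteq> 0 \<and> (\<Sum>i<n. x i * y i) = sc (inverse lam) 1"

text \<open>Tensor products, as in the standard construction: the free k-vector space on
  A \<times> B (finitely supported functions A \<times> B \<Rightarrow> k) modulo the span of the
  relations (additivity in each slot, k-homogeneity in each slot, S-balancedness).\<close>

definition fin_supp_on :: "('x \<Rightarrow> 'k::zero) \<Rightarrow> 'x set \<Rightarrow> bool" where
  "fin_supp_on f X \<longleftrightarrow> finite {p. f p \<noteq> 0} \<and> {p. f p \<noteq> 0} \<subseteq> X"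

definition ind :: "'x \<Rightarrow> 'x \<Rightarrow> 'k::zero_neq_one" where
  "ind x = (\<lambda>p. if p = x then 1 else 0)"

definition fspan :: "('x \<Rightarrow> 'k::field) set \<Rightarrow> ('x \<Rightarrow> 'k) set" where
  "fspan G = {f. \<exists>t r. finite t \<and> t \<subseteq> G \<and> f = (\<lambda>p. \<Sum>g\<in>t. r g * g p)}"

definition tensor_rels ::
  "('k::field \<Rightarrow> 'a::ring_1 \<Rightarrow> 'a) \<Rightarrow> 'a set \<Rightarrow> 'a set \<Rightarrow> 'a set \<Rightarrow> ('a \<times> 'a \<Rightarrow> 'k) set" where
  "tensor_rels sc S A B =
     {(\<lambda>p. ind (a + a', b) p - ind (a, b) p - ind (a', b) p) | a a' b. a \<in> A \<and> a' \<in> A \<and> b \<in> B}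
   \<union> {(\<lambda>p. ind (a, b + b') p - ind (a, b) p - ind (a, b') p) | a b b'. a \<in> A \<and> b \<in> B \<and> b' \<in> B}
   \<union> {(\<lambda>p. ind (sc c a, b) p - c * ind (a, b) p) | c a b. a \<in> A \<and> b \<in> B}
   \<union> {(\<lambda>p. ind (a, sc c b) p - c * ind (a, b) p) | c a b. a \<in> A \<and> b \<in> B}
   \<union> {(\<lambda>p. ind (a * s, b) p - ind (a, s * b) p) | a s b. a \<in> A \<and> s \<in> S \<and> b \<in> B}"

definition tsum :: "('k::field \<Rightarrow> 'a::ring_1 \<Rightarrow> 'a) \<Rightarrow> ('a \<Rightarrow> 'a \<Rightarrow> 'a) \<Rightarrow> ('a \<times> 'a \<Rightarrow> 'k) \<Rightarrow> 'a" where
  "tsum sc phi f = (\<Sum>p\<in>{p. f p \<noteq> 0}. sc (f p) (phi (fst p) (snd p)))"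

text \<open>The map A \<otimes>_S B \<rightarrow> C, a \<otimes> b \<mapsto> phi a b, is a well-defined k-linear isomorphism:
  the induced map on the free space lands in C, kills the relations, is onto C,
  and its kernel is exactly the span of the relations.\<close>
definition tensor_iso ::
  "('k::field \<Rightarrow> 'a::ring_1 \<Rightarrow> 'a) \<Rightarrow> 'a set \<Rightarrow> 'a set \<Rightarrow> 'a set \<Rightarrow> 'a set \<Rightarrow> ('a \<Rightarrow> 'a \<Rightarrow> 'a) \<Rightarrow> bool" where
  "tensor_iso sc S A B C phi \<longleftrightarrow>
     (\<forall>f. fin_supp_on f (A \<times> B) \<longrightarrow> tsum sc phi f \<in> C) \<and>
     (\<forall>g\<in>tensor_rels sc S A B. tsum sc phi g = 0) \<and>
     (\<forall>c\<in>C. \<exists>f. fin_supp_on f (A \<times> B) \<and> c = tsum sc phi f) \<and>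
     (\<forall>f. fin_supp_on f (A \<times> B) \<longrightarrow> tsum sc phi f = 0 \<longrightarrow> f \<in> fspan (tensor_rels sc S A B))"

text \<open>R1 (with e and E_R) realises the basic construction of (S \<subseteq> R, E_S, lambda):
  R1 is a subalgebra containing R, e \<in> R1, a \<otimes> b \<mapsto> a e b is an isomorphism
  R \<otimes>_S R \<cong> R1, the product satisfies (a e b)(c e d) = a E_S(bc) e d (encoded by
  e r e = E_S(r) e), and E_R : R1 \<rightarrow> R is k-linear with E_R(a e b) = lambda a b.
  (The unit, the embedding of R and e = 1 \<otimes> 1 then match the construction.)\<close>
definition basic_construction ::
  "('k::field \<Rightarrow> 'a::ring_1 \<Rightarrow> 'a) \<Rightarrow> 'a set \<Rightarrow> 'a set \<Rightarrow> ('a \<Rightarrow> 'a) \<Rightarrow> 'k \<Rightarrow>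
   'a \<Rightarrow> 'a set \<Rightarrow> ('a \<Rightarrow> 'a) \<Rightarrow> bool" where
  "basic_construction sc S R ES lam e R1 ER \<longleftrightarrow>
     subalg sc R1 \<and> R \<subseteq> R1 \<and> e \<in> R1 \<and>
     (\<forall>r\<in>R. e * r * e = ES r * e) \<and>
     tensor_iso sc S R R R1 (\<lambda>a b. a * e * b) \<and>
     (\<forall>z\<in>R1. ER z \<in> R) \<and>
     (\<forall>z\<in>R1. \<forall>w\<in>R1. ER (z + w) = ER z + ER w) \<and>
     (\<forall>c. \<forall>z\<in>R1. ER (sc c z) = sc c (ER z)) \<and>
     (\<forall>a\<in>R. \<forall>b\<in>R. ER (a * e * b) = sc lam (a * b))"

definition right_free_basis :: "'a::ring_1 set \<Rightarrow> 'a set \<Rightarrow> 'a set \<Rightarrow> bool" where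
  "right_free_basis S T P \<longleftrightarrow> P \<subseteq> T \<and>
     (\<forall>t\<in>T. \<exists>!f. (\<forall>p. f p \<in> S) \<and> (\<forall>p. p \<notin> P \<longrightarrow> f p = 0) \<and> finite {p. f p \<noteq> 0} \<and>
                 t = (\<Sum>p\<in>{p. f p \<noteq> 0}. p * f p))"

end

theory Submission
  imports Defs
begin

locale kalg =
  fixes sc :: "'k::field \<Rightarrow> 'a::ring_1 \<Rightarrow> 'a"
  assumes alg: "k_algebra sc"
begin

lemma sc_add: "sc c (x + y) = sc c x + sc c y" using alg unfolding k_algebra_def by blast
lemma sc_addk: "sc (c + d) x = sc c x + sc d x" using alg unfolding k_algebra_def by blast
lemma sc_sc[simp]: "sc c (sc d x) = sc (c * d) x" using alg unfolding k_algebra_def by blast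
lemma sc_one[simp]: "sc 1 x = x" using alg unfolding k_algebra_def by blast
lemma sc_mult_left[simp]: "sc c x * y = sc c (x * y)" using alg unfolding k_algebra_def by metis
lemma sc_mult_right[simp]: "x * sc c y = sc c (x * y)" using alg unfolding k_algebra_def by metis
lemma sc_zero[simp]: "sc c 0 = 0"
  using sc_add[of c 0 0] by simp
lemma sc_zerok[simp]: "sc 0 x = 0"
  using sc_addk[of 0 0 x] by simp
lemma sc_uminus: "sc c (- x) = - sc c x"
  using sc_add[of c x "- x"] by (metis add.right_inverse add_eq_0_iff sc_zero)
lemma sc_diff: "sc c (x - y) = sc c x - sc c y"
  using sc_add[of c x "- y"] sc_uminus[of c y] by simp
lemma sc_minusk: "sc (- c) x = - sc c x"
  using sc_addk[of c "- c" x] by (metis add.right_inverse add_eq_0_iff sc_zerok)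
lemma sc_sum: "sc c (sum f I) = (\<Sum>i\<in>I. sc c (f i))"
  by (induction I rule: infinite_finite_induct) (auto simp: sc_add)
lemma sc_sumk: "sc (sum f I) x = (\<Sum>i\<in>I. sc (f i) x)"
  by (induction I rule: infinite_finite_induct) (auto simp: sc_addk)
lemma sc_1_mult[simp]: "sc c (1 * x) = sc c x" "sc c (x * 1) = sc c x" by simp_all

lemma subalg_1: "subalg sc X \<Longrightarrow> 1 \<in> X" by (simp add: subalg_def)
lemma subalg_add: "subalg sc X \<Longrightarrow> u \<in> X \<Longrightarrow> v \<in> X \<Longrightarrow> u + v \<in> X" by (simp add: subalg_def)
lemma subalg_mult: "subalg sc X \<Longrightarrow> u \<in> X \<Longrightarrow> v \<in> X \<Longrightarrow> u * v \<in> X" by (simp add: subalg_def)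
lemma subalg_sc: "subalg sc X \<Longrightarrow> u \<in> X \<Longrightarrow> sc c u \<in> X" by (simp add: subalg_def)
lemma subalg_0: "subalg sc X \<Longrightarrow> 0 \<in> X"
  using subalg_sc[of X 1 0] subalg_1[of X] by (metis sc_zerok)
lemma subalg_scal: "subalg sc X \<Longrightarrow> sc c 1 \<in> X"
  using subalg_sc subalg_1 by blast
lemma subalg_uminus: "subalg sc X \<Longrightarrow> u \<in> X \<Longrightarrow> - u \<in> X"
  using subalg_sc[of X u "-1"] by (simp add: sc_minusk)
lemma subalg_diff: "subalg sc X \<Longrightarrow> u \<in> X \<Longrightarrow> v \<in> X \<Longrightarrow> u - v \<in> X"
  using subalg_add subalg_uminus by (metis diff_conv_add_uminus)
lemma subalg_sum: "subalg sc X \<Longrightarrow> (\<And>i. i \<in> I \<Longrightarrow> f i \<in> X) \<Longrightarrow> sum f I \<in> X"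
  by (induction I rule: infinite_finite_induct) (auto intro: subalg_0 subalg_add)

lemma subalg_cent: "subalg sc R \<Longrightarrow> subalg sc (cent R X)"
  unfolding subalg_def cent_def by (auto simp: algebra_simps) (metis mult.assoc)
lemma cent_sub: "cent R X \<subseteq> R" by (auto simp: cent_def)
lemma centI: "r \<in> R \<Longrightarrow> (\<And>x. x \<in> X \<Longrightarrow> r * x = x * r) \<Longrightarrow> r \<in> cent R X"
  by (auto simp: cent_def)
lemma centD: "r \<in> cent R X \<Longrightarrow> x \<in> X \<Longrightarrow> r * x = x * r"
  by (auto simp: cent_def)
lemma centR: "r \<in> cent R X \<Longrightarrow> r \<in> R"
  by (auto simp: cent_def)
lemma cent_mono: "R \<subseteq> R' \<Longrightarrow> X' \<subseteq> X \<Longrightarrow> cent R X \<subseteq> cent R' X'"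
  by (auto simp: cent_def)

lemma scalars_cent: "subalg sc R \<Longrightarrow> scalars sc \<subseteq> cent R X"
  by (auto simp: scalars_def cent_def intro: subalg_scal)

end

context kalg
begin

lemma tsum_superset:
  assumes "finite T" "{p. f p \<noteq> 0} \<subseteq> T"
  shows "tsum sc phi f = (\<Sum>p\<in>T. sc (f p) (phi (fst p) (snd p)))"
  unfolding tsum_def by (rule sum.mono_neutral_left) (use assms in auto)

lemma tsum_lincomb:
  assumes I: "finite I"
  shows "tsum sc phi (\<lambda>x. \<Sum>i\<in>I. k i * ind (u i) x) = (\<Sum>i\<in>I. sc (k i) (phi (fst (u i)) (snd (u i))))"
proof -
  let ?f = "\<lambda>x. \<Sum>i\<in>I. k i * ind (u i) x"
  let ?phi = "\<lambda>p. phi (fst p) (snd p)"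
  have fx: "?f x = (\<Sum>i\<in>{i\<in>I. u i = x}. k i)" for x
  proof -
    have "(\<Sum>i\<in>{i\<in>I. u i = x}. k i) = (\<Sum>i\<in>I. if u i = x then k i else 0)"
      by (rule sum.inter_filter) (rule I)
    also have "\<dots> = ?f x"
      by (rule sum.cong) (auto simp: ind_def)
    finally show ?thesis by simp
  qed
  have supp: "{p. ?f p \<noteq> 0} \<subseteq> u ` I"
  proof
    fix p assume "p \<in> {p. ?f p \<noteq> 0}"
    then have "{i\<in>I. u i = p} \<noteq> {}"
    proof (intro notI)
      assume "{i\<in>I. u i = p} = {}"
      then have "?f p = 0" unfolding fx[of p] by (simp only: sum.empty)
      then show False using \<open>p \<in> {p. ?f p \<noteq> 0}\<close> by simp
    qed
    then show "p \<in> u ` I" by auto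
  qed
  have "tsum sc phi ?f = (\<Sum>p\<in>u ` I. sc (?f p) (?phi p))"
    by (rule tsum_superset) (use I supp in auto)
  also have "\<dots> = (\<Sum>p\<in>u ` I. \<Sum>i\<in>{i\<in>I. u i = p}. sc (k i) (?phi (u i)))"
    by (rule sum.cong) (auto simp: fx sc_sumk)
  also have "\<dots> = (\<Sum>i\<in>I. sc (k i) (?phi (u i)))"
    by (rule sum.image_gen[symmetric]) (use I in auto)
  finally show ?thesis .
qed

lemma fin_supp_ind: "finite {p. (ind u p :: 'k) \<noteq> 0}"
  by (rule finite_subset[of _ "{u}"]) (auto simp: ind_def)

lemma tsum_ind: "tsum sc phi (ind u) = phi (fst u) (snd u)"
proof -
  have "tsum sc phi (ind u) = (\<Sum>p\<in>{u}. sc (ind u p) (phi (fst p) (snd p)))"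
    by (rule tsum_superset) (auto simp: ind_def)
  then show ?thesis by (simp add: ind_def)
qed

lemma tsum_add:
  assumes "finite {p. f p \<noteq> 0}" "finite {p. g p \<noteq> 0}"
  shows "tsum sc phi (\<lambda>p. f p + g p) = tsum sc phi f + tsum sc phi g"
proof -
  let ?T = "{p. f p \<noteq> 0} \<union> {p. g p \<noteq> 0}"
  have fin: "finite ?T" using assms by simp
  have 1: "tsum sc phi f = (\<Sum>p\<in>?T. sc (f p) (phi (fst p) (snd p)))"
    by (rule tsum_superset[OF fin]) auto
  have 2: "tsum sc phi g = (\<Sum>p\<in>?T. sc (g p) (phi (fst p) (snd p)))"
    by (rule tsum_superset[OF fin]) auto
  have 3: "tsum sc phi (\<lambda>p. f p + g p) = (\<Sum>p\<in>?T. sc (f p + g p) (phi (fst p) (snd p)))"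
    by (rule tsum_superset[OF fin]) auto
  show ?thesis unfolding 1 2 3 by (simp add: sc_addk sum.distrib)
qed

lemma tsum_smult:
  assumes "finite {p. f p \<noteq> 0}"
  shows "tsum sc phi (\<lambda>p. c * f p) = sc c (tsum sc phi f)"
proof -
  have 1: "tsum sc phi f = (\<Sum>p\<in>{p. f p \<noteq> 0}. sc (f p) (phi (fst p) (snd p)))"
    by (rule tsum_superset[OF assms]) auto
  have 3: "tsum sc phi (\<lambda>p. c * f p) = (\<Sum>p\<in>{p. f p \<noteq> 0}. sc (c * f p) (phi (fst p) (snd p)))"
    by (rule tsum_superset[OF assms]) auto
  show ?thesis unfolding 1 3 by (simp add: sc_sum)
qed

lemma fin_supp_add: "finite {p. f p \<noteq> 0} \<Longrightarrow> finite {p. g p \<noteq> 0} \<Longrightarrow> finite {p. f p + g p \<noteq> (0::'k)}"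
  by (rule finite_subset[of _ "{p. f p \<noteq> 0} \<union> {p. g p \<noteq> 0}"]) auto

lemma fin_supp_smult: "finite {p. f p \<noteq> 0} \<Longrightarrow> finite {p. c * f p \<noteq> (0::'k)}"
  by (rule finite_subset[of _ "{p. f p \<noteq> 0}"]) auto

lemma tsum_ind2: "tsum sc phi (\<lambda>p. ind u p - c * ind v p) = phi (fst u) (snd u) - sc c (phi (fst v) (snd v))"
proof -
  have e: "(\<lambda>p. ind u p - c * ind v p :: 'k) = (\<lambda>p. ind u p + (- c) * ind v p)"
    by auto
  have "tsum sc phi (\<lambda>p. ind u p + (- c) * ind v p) = tsum sc phi (ind u) + tsum sc phi (\<lambda>p. (- c) * ind v p)"
    by (rule tsum_add[OF fin_supp_ind fin_supp_smult[OF fin_supp_ind]])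
  also have "\<dots> = phi (fst u) (snd u) + sc (- c) (phi (fst v) (snd v))"
    by (simp only: tsum_smult[OF fin_supp_ind] tsum_ind)
  finally show ?thesis unfolding e by (simp add: sc_minusk)
qed

lemma tsum_ind3: "tsum sc phi (\<lambda>p. ind u p - ind v p - ind w p) =
    phi (fst u) (snd u) - phi (fst v) (snd v) - phi (fst w) (snd w)"
proof -
  have e: "(\<lambda>p. ind u p - ind v p - ind w p :: 'k) = (\<lambda>p. (ind u p - 1 * ind v p) + (-1) * ind w p)"
    by auto
  have f: "finite {p. (ind u p - 1 * ind v p :: 'k) \<noteq> 0}"
    by (rule finite_subset[of _ "{u, v}"]) (auto simp: ind_def)
  have "tsum sc phi (\<lambda>p. (ind u p - 1 * ind v p) + (-1) * ind w p) =
      tsum sc phi (\<lambda>p. ind u p - 1 * ind v p) + tsum sc phi (\<lambda>p. (- 1) * ind w p)"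
    by (rule tsum_add[OF f fin_supp_smult[OF fin_supp_ind]])
  also have "\<dots> = phi (fst u) (snd u) - sc 1 (phi (fst v) (snd v)) + sc (- 1) (phi (fst w) (snd w))"
    by (simp only: tsum_smult[OF fin_supp_ind] tsum_ind2 tsum_ind)
  finally show ?thesis unfolding e by (simp add: sc_minusk)
qed

lemma tsum_sum_ind:
  assumes "finite I"
  shows "tsum sc phi (\<lambda>x. \<Sum>i\<in>I. ind (u i) x) = (\<Sum>i\<in>I. phi (fst (u i)) (snd (u i)))"
  using tsum_lincomb[OF assms, where k="\<lambda>_. 1" and phi=phi and u=u] by simp

end


lemma fspanI: "finite t \<Longrightarrow> t \<subseteq> G \<Longrightarrow> f = (\<lambda>p. \<Sum>h\<in>t. r h * h p) \<Longrightarrow> f \<in> fspan G"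
  unfolding fspan_def by (rule CollectI, rule exI[of _ t], rule exI[of _ r]) simp

lemma fspanE: "f \<in> fspan G \<Longrightarrow> (\<And>t r. finite t \<Longrightarrow> t \<subseteq> G \<Longrightarrow> f = (\<lambda>p. \<Sum>h\<in>t. r h * h p) \<Longrightarrow> P) \<Longrightarrow> P"
  unfolding fspan_def by auto

lemma fspan_gen: "g \<in> G \<Longrightarrow> g \<in> fspan G"
proof -
  assume g: "g \<in> G"
  have "g = (\<lambda>p. \<Sum>h\<in>{g}. 1 * h p)" by simp
  then show ?thesis using g by (intro fspanI[of "{g}"]) auto
qed

lemma fspan_zero: "(\<lambda>_. 0) \<in> fspan G"
proof -
  have "(\<lambda>_. 0) = (\<lambda>p. \<Sum>h\<in>{}. (\<lambda>_. 0) h * h p)" by simp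
  then show ?thesis by (rule fspanI[rotated 2]) auto
qed

lemma fspan_add:
  assumes "f \<in> fspan G" "g \<in> fspan G"
  shows "(\<lambda>p. f p + g p) \<in> fspan G"
proof -
  obtain t r where t: "finite t" "t \<subseteq> G" "f = (\<lambda>p. \<Sum>h\<in>t. r h * h p)"
    by (rule fspanE[OF assms(1)])
  obtain t' r' where t': "finite t'" "t' \<subseteq> G" "g = (\<lambda>p. \<Sum>h\<in>t'. r' h * h p)"
    by (rule fspanE[OF assms(2)])
  define r1 where "r1 h = (if h \<in> t then r h else 0)" for h
  define r2 where "r2 h = (if h \<in> t' then r' h else 0)" for h
  have gen: "(\<Sum>h\<in>t \<union> t'. (if h \<in> X then rr h else 0) * h p) = (\<Sum>h\<in>X. rr h * h p)"
    if X: "X \<subseteq> t \<union> t'" for X rr p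
  proof -
    have "(\<Sum>h\<in>t \<union> t'. (if h \<in> X then rr h else 0) * h p) = (\<Sum>h\<in>t \<union> t'. if h \<in> X then rr h * h p else 0)"
      by (rule sum.cong) auto
    also have "\<dots> = (\<Sum>h\<in>(t \<union> t') \<inter> X. rr h * h p)"
      by (rule sum.inter_restrict[symmetric]) (use t(1) t'(1) in auto)
    also have "(t \<union> t') \<inter> X = X" using X by auto
    finally show ?thesis .
  qed
  have "(\<lambda>p. f p + g p) = (\<lambda>p. \<Sum>h\<in>t \<union> t'. (r1 h + r2 h) * h p)"
  proof
    fix p
    have "(\<Sum>h\<in>t \<union> t'. (r1 h + r2 h) * h p) = (\<Sum>h\<in>t \<union> t'. r1 h * h p + r2 h * h p)"
      by (simp only: distrib_right)
    also have "\<dots> = (\<Sum>h\<in>t \<union> t'. r1 h * h p) + (\<Sum>h\<in>t \<union> t'. r2 h * h p)"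
      by (rule sum.distrib)
    also have "(\<Sum>h\<in>t \<union> t'. r1 h * h p) = f p"
      unfolding r1_def t(3) by (rule gen) auto
    also have "(\<Sum>h\<in>t \<union> t'. r2 h * h p) = g p"
      unfolding r2_def t'(3) by (rule gen) auto
    finally show "f p + g p = (\<Sum>h\<in>t \<union> t'. (r1 h + r2 h) * h p)" by simp
  qed
  moreover have "finite (t \<union> t')" "t \<union> t' \<subseteq> G" using t t' by auto
  ultimately show ?thesis by (intro fspanI[of "t \<union> t'"]) 
qed

lemma fspan_smult:
  assumes "f \<in> fspan G"
  shows "(\<lambda>p. c * f p) \<in> fspan G"
proof -
  obtain t r where t: "finite t" "t \<subseteq> G" "f = (\<lambda>p. \<Sum>h\<in>t. r h * h p)"
    by (rule fspanE[OF assms(1)])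
  have "(\<lambda>p. c * f p) = (\<lambda>p. \<Sum>h\<in>t. (c * r h) * h p)"
    by (simp add: t(3) sum_distrib_left mult.assoc)
  then show ?thesis using t by (intro fspanI[of t]) 
qed

lemma fspan_eq: "f \<in> fspan G \<Longrightarrow> (\<And>p. f p = g p) \<Longrightarrow> g \<in> fspan G"
proof -
  assume "f \<in> fspan G" "\<And>p. f p = g p"
  then have "f = g" by (simp add: fun_eq_iff)
  then show ?thesis using \<open>f \<in> fspan G\<close> by simp
qed

lemma fspan_neg: "f \<in> fspan G \<Longrightarrow> (\<lambda>p. - f p) \<in> fspan G"
  using fspan_smult[of f G "-1"] by simp

lemma fspan_diff: "f \<in> fspan G \<Longrightarrow> g \<in> fspan G \<Longrightarrow> (\<lambda>p. f p - g p) \<in> fspan G"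
  using fspan_add[of f G "\<lambda>p. - g p"] fspan_neg[of g G] by simp

lemma fspan_sum:
  assumes "finite I" "\<And>i. i \<in> I \<Longrightarrow> F i \<in> fspan G"
  shows "(\<lambda>p. \<Sum>i\<in>I. F i p) \<in> fspan G"
  using assms
proof (induction I rule: finite_induct)
  case empty then show ?case by (simp add: fspan_zero)
next
  case (insert i I)
  then show ?case using fspan_add[of "F i" G "\<lambda>p. \<Sum>i\<in>I. F i p"] by simp
qed


context kalg
begin

lemma rel_add1: "a \<in> A \<Longrightarrow> a' \<in> A \<Longrightarrow> b \<in> B \<Longrightarrow>
  (\<lambda>p. ind (a + a', b) p - ind (a, b) p - ind (a', b) p) \<in> tensor_rels sc S A B"
  unfolding tensor_rels_def by (rule UnI1, rule UnI1, rule UnI1, rule UnI1, rule CollectI, rule exI[of _ a], rule exI[of _ a'], rule exI[of _ b]) simp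

lemma rel_add2: "a \<in> A \<Longrightarrow> b \<in> B \<Longrightarrow> b' \<in> B \<Longrightarrow>
  (\<lambda>p. ind (a, b + b') p - ind (a, b) p - ind (a, b') p) \<in> tensor_rels sc S A B"
  unfolding tensor_rels_def by (rule UnI1, rule UnI1, rule UnI1, rule UnI2, rule CollectI, rule exI[of _ a], rule exI[of _ b], rule exI[of _ b']) simp

lemma rel_sc1: "a \<in> A \<Longrightarrow> b \<in> B \<Longrightarrow>
  (\<lambda>p. ind (sc c a, b) p - c * ind (a, b) p) \<in> tensor_rels sc S A B"
  unfolding tensor_rels_def by (rule UnI1, rule UnI1, rule UnI2, rule CollectI, rule exI[of _ c], rule exI[of _ a], rule exI[of _ b]) simp

lemma rel_sc2: "a \<in> A \<Longrightarrow> b \<in> B \<Longrightarrow>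
  (\<lambda>p. ind (a, sc c b) p - c * ind (a, b) p) \<in> tensor_rels sc S A B"
  unfolding tensor_rels_def by (rule UnI1, rule UnI2, rule CollectI, rule exI[of _ c], rule exI[of _ a], rule exI[of _ b]) simp

lemma rel_bal: "a \<in> A \<Longrightarrow> s \<in> S \<Longrightarrow> b \<in> B \<Longrightarrow>
  (\<lambda>p. ind (a * s, b) p - ind (a, s * b) p) \<in> tensor_rels sc S A B"
  unfolding tensor_rels_def by (rule UnI2, rule CollectI, rule exI[of _ a], rule exI[of _ s], rule exI[of _ b]) simp

lemma ind_0_2:
  assumes "a \<in> A" "subalg sc B"
  shows "ind (a, 0) \<in> fspan (tensor_rels sc S A B)"
proof -
  have "(\<lambda>p. ind (a, 0 + 0) p - ind (a, 0) p - ind (a, 0) p) \<in> tensor_rels sc S A B"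
    by (rule rel_add2) (use assms subalg_0 in auto)
  then have "(\<lambda>p. - (ind (a, 0 + 0) p - ind (a, 0) p - ind (a, 0) p)) \<in> fspan (tensor_rels sc S A B)"
    by (intro fspan_neg fspan_gen)
  then show ?thesis by (rule fspan_eq) simp
qed

lemma ind_0_1:
  assumes "b \<in> B" "subalg sc A"
  shows "ind (0, b) \<in> fspan (tensor_rels sc S A B)"
proof -
  have "(\<lambda>p. ind (0 + 0, b) p - ind (0, b) p - ind (0, b) p) \<in> tensor_rels sc S A B"
    by (rule rel_add1) (use assms subalg_0 in auto)
  then have "(\<lambda>p. - (ind (0 + 0, b) p - ind (0, b) p - ind (0, b) p)) \<in> fspan (tensor_rels sc S A B)"
    by (intro fspan_neg fspan_gen)
  then show ?thesis by (rule fspan_eq) simp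
qed

lemma slot2:
  assumes A: "subalg sc A" and B: "subalg sc B" and Q: "finite Q" and a: "a \<in> A"
    and b: "\<And>q. q \<in> Q \<Longrightarrow> b q \<in> B"
  shows "(\<lambda>x. ind (a, \<Sum>q\<in>Q. sc (k q) (b q)) x - (\<Sum>q\<in>Q. k q * ind (a, b q) x)) \<in> fspan (tensor_rels sc S A B)"
  using Q b
proof (induction Q rule: finite_induct)
  case empty
  then show ?case using ind_0_2[OF a B] by (simp add: fspan_eq)
next
  case (insert q Q)
  let ?r = "\<Sum>q\<in>Q. sc (k q) (b q)"
  let ?s = "sc (k q) (b q)"
  have r: "?r \<in> B" using insert B by (intro subalg_sum subalg_sc) auto
  have s: "?s \<in> B" using insert B by (intro subalg_sc) auto
  have F1: "(\<lambda>p. ind (a, ?s + ?r) p - ind (a, ?s) p - ind (a, ?r) p) \<in> fspan (tensor_rels sc S A B)"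
    by (intro fspan_gen rel_add2 a r s)
  have F2: "(\<lambda>p. ind (a, ?s) p - k q * ind (a, b q) p) \<in> fspan (tensor_rels sc S A B)"
    using insert by (intro fspan_gen rel_sc2 a) auto
  have F3: "(\<lambda>x. ind (a, ?r) x - (\<Sum>q\<in>Q. k q * ind (a, b q) x)) \<in> fspan (tensor_rels sc S A B)"
    using insert by auto
  have "(\<lambda>x. (ind (a, ?s + ?r) x - ind (a, ?s) x - ind (a, ?r) x) + (ind (a, ?s) x - k q * ind (a, b q) x)
      + (ind (a, ?r) x - (\<Sum>q\<in>Q. k q * ind (a, b q) x))) \<in> fspan (tensor_rels sc S A B)"
    by (intro fspan_add F1 F2 F3)
  then show ?case
    by (rule fspan_eq) (use insert in \<open>simp add: algebra_simps\<close>)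
qed

lemma slot1:
  assumes A: "subalg sc A" and B: "subalg sc B" and Q: "finite Q" and b: "b \<in> B"
    and a: "\<And>q. q \<in> Q \<Longrightarrow> a q \<in> A"
  shows "(\<lambda>x. ind (\<Sum>q\<in>Q. sc (k q) (a q), b) x - (\<Sum>q\<in>Q. k q * ind (a q, b) x)) \<in> fspan (tensor_rels sc S A B)"
  using Q a
proof (induction Q rule: finite_induct)
  case empty
  then show ?case using ind_0_1[OF b A] by (simp add: fspan_eq)
next
  case (insert q Q)
  let ?r = "\<Sum>q\<in>Q. sc (k q) (a q)"
  let ?s = "sc (k q) (a q)"
  have r: "?r \<in> A" using insert A by (intro subalg_sum subalg_sc) auto
  have s: "?s \<in> A" using insert A by (intro subalg_sc) auto
  have F1: "(\<lambda>p. ind (?s + ?r, b) p - ind (?s, b) p - ind (?r, b) p) \<in> fspan (tensor_rels sc S A B)"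
    by (intro fspan_gen rel_add1 b r s)
  have F2: "(\<lambda>p. ind (?s, b) p - k q * ind (a q, b) p) \<in> fspan (tensor_rels sc S A B)"
    using insert by (intro fspan_gen rel_sc1 b) auto
  have F3: "(\<lambda>x. ind (?r, b) x - (\<Sum>q\<in>Q. k q * ind (a q, b) x)) \<in> fspan (tensor_rels sc S A B)"
    using insert by auto
  have "(\<lambda>x. (ind (?s + ?r, b) x - ind (?s, b) x - ind (?r, b) x) + (ind (?s, b) x - k q * ind (a q, b) x)
      + (ind (?r, b) x - (\<Sum>q\<in>Q. k q * ind (a q, b) x))) \<in> fspan (tensor_rels sc S A B)"
    by (intro fspan_add F1 F2 F3)
  then show ?case
    by (rule fspan_eq) (use insert in \<open>simp add: algebra_simps\<close>)
qed

end

context kalg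
begin

lemma supp_sum_ind: "{x. (\<Sum>i\<in>I. ind (u i) x :: 'k) \<noteq> 0} \<subseteq> u ` I"
proof
  fix x assume nz: "x \<in> {x. (\<Sum>i\<in>I. ind (u i) x :: 'k) \<noteq> 0}"
  show "x \<in> u ` I"
  proof (rule ccontr)
    assume "x \<notin> u ` I"
    then have "\<forall>i\<in>I. (ind (u i) x :: 'k) = 0" by (auto simp: ind_def)
    then have "(\<Sum>i\<in>I. ind (u i) x :: 'k) = 0" by simp
    then show False using nz by simp
  qed
qed

lemma f_as_sum:
  fixes f :: "'x \<Rightarrow> 'k"
  assumes "finite {p. f p \<noteq> 0}"
  shows "f x = (\<Sum>p\<in>{p. f p \<noteq> 0}. f p * ind p x)"
proof -
  have "(\<Sum>p\<in>{p. f p \<noteq> 0}. f p * ind p x) = (\<Sum>p\<in>{p. f p \<noteq> 0}. if x = p then f p else 0)"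
    by (rule sum.cong) (auto simp: ind_def)
  also have "\<dots> = (if x \<in> {p. f p \<noteq> 0} then f x else 0)"
    by (rule sum.delta'[OF assms])
  finally show ?thesis by auto
qed

lemma additive_zero:
  fixes g :: "'a \<Rightarrow> 'a"
  assumes C: "subalg sc C" and gadd: "\<forall>u\<in>C. \<forall>v\<in>C. g (u + v) = g u + g v"
  shows "g 0 = 0"
proof -
  have z: "0 \<in> C" by (rule subalg_0[OF C])
  have "g (0 + 0) = g 0 + g 0" using bspec[OF bspec[OF gadd z] z] .
  then have h: "g 0 + g 0 = g 0" by simp
  then show "g 0 = 0" using add_cancel_left_right[of "g 0" "g 0"] by simp
qed

lemma additive_sum:
  fixes g :: "'a \<Rightarrow> 'a"
  assumes C: "subalg sc C" and gadd: "\<forall>u\<in>C. \<forall>v\<in>C. g (u + v) = g u + g v"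
    and h: "\<And>i. i \<in> I \<Longrightarrow> h i \<in> C"
  shows "g (\<Sum>i\<in>I. h i) = (\<Sum>i\<in>I. g (h i))"
proof -
  have g0: "g 0 = 0" by (rule additive_zero[OF C gadd])
  show ?thesis using h
  proof (induction I rule: infinite_finite_induct)
    case (infinite A) then show ?case by (simp add: g0)
  next
    case empty then show ?case by (simp add: g0)
  next
    case (insert i I)
    have hi: "h i \<in> C" using insert by simp
    have hs: "(\<Sum>i\<in>I. h i) \<in> C" using insert by (intro subalg_sum[OF C]) auto
    have "g (\<Sum>i\<in>insert i I. h i) = g (h i + (\<Sum>i\<in>I. h i))" using insert by simp
    also have "\<dots> = g (h i) + g (\<Sum>i\<in>I. h i)" using bspec[OF bspec[OF gadd hi] hs] .
    also have "g (\<Sum>i\<in>I. h i) = (\<Sum>i\<in>I. g (h i))" using insert by simp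
    finally show ?case using insert by simp
  qed
qed

lemma tsum_in:
  assumes C: "subalg sc C" and phiC: "\<forall>a\<in>A. \<forall>b\<in>B. phi a b \<in> C"
    and f: "fin_supp_on f (A \<times> B)"
  shows "tsum sc phi f \<in> C"
  unfolding tsum_def
  using f phiC by (intro subalg_sum[OF C] subalg_sc[OF C]) (auto simp: fin_supp_on_def)

lemma rels_zero:
  assumes "g \<in> tensor_rels sc (scalars sc) A B"
  shows "tsum sc (\<lambda>a b. a * b) g = 0"
  using assms unfolding tensor_rels_def
  apply (elim UnE CollectE exE conjE)
  apply (simp_all only: tsum_ind3 tsum_ind2 tsum_ind2[where c=1, simplified] fst_conv snd_conv)
  apply (simp_all add: distrib_left distrib_right scalars_def)
  apply (auto simp: mult.assoc)
  done

lemma iso_expand2: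
  assumes A: "subalg sc A" and B: "subalg sc B" and C: "subalg sc C"
    and phiC: "\<forall>a\<in>A. \<forall>b\<in>B. a * b \<in> C"
    and Q: "finite Q" and psi: "\<forall>q\<in>Q. psi q \<in> B"
    and exp: "\<forall>c\<in>C. (\<forall>q\<in>Q. g q c \<in> A) \<and> c = (\<Sum>q\<in>Q. g q c * psi q)"
    and expB: "\<forall>b\<in>B. b = (\<Sum>q\<in>Q. sc (kap q b) (psi q))"
    and gprod: "\<forall>q\<in>Q. \<forall>a\<in>A. \<forall>b\<in>B. g q (a * b) = sc (kap q b) a"
    and gadd: "\<forall>q\<in>Q. \<forall>u\<in>C. \<forall>v\<in>C. g q (u + v) = g q u + g q v"
    and gsc: "\<forall>q\<in>Q. \<forall>c. \<forall>u\<in>C. g q (sc c u) = sc c (g q u)"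
  shows "tensor_iso sc (scalars sc) A B C (\<lambda>a b. a * b)"
  unfolding tensor_iso_def
proof (intro conjI allI impI ballI)
  fix f :: "'a \<times> 'a \<Rightarrow> 'k"
  assume "fin_supp_on f (A \<times> B)"
  moreover have "\<forall>a\<in>A. \<forall>b\<in>B. (\<lambda>a b. a * b) a b \<in> C" using phiC by simp
  ultimately show "tsum sc (\<lambda>a b. a * b) f \<in> C" by (intro tsum_in[OF C])
next
  fix g assume "g \<in> tensor_rels sc (scalars sc) A B"
  then show "tsum sc (\<lambda>a b. a * b) g = 0"
    by (rule rels_zero)
next
  fix c assume c: "c \<in> C"
  let ?u = "\<lambda>q. (g q c, psi q)"
  let ?f = "\<lambda>x. \<Sum>q\<in>Q. ind (?u q) x :: 'k"
  have "{x. ?f x \<noteq> 0} \<subseteq> ?u ` Q" by (rule supp_sum_ind)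
  moreover have "?u ` Q \<subseteq> A \<times> B" using exp c psi by auto
  ultimately have fs: "fin_supp_on ?f (A \<times> B)"
    unfolding fin_supp_on_def using Q by (auto intro: finite_subset)
  have "tsum sc (\<lambda>a b. a * b) ?f = (\<Sum>q\<in>Q. g q c * psi q)"
    using tsum_sum_ind[OF Q, where phi="\<lambda>a b. a * b" and u="?u"] by simp
  also have "\<dots> = c" using exp c by simp
  finally show "\<exists>f. fin_supp_on f (A \<times> B) \<and> c = tsum sc (\<lambda>a b. a * b) f"
    using fs by metis
next
  fix f :: "'a \<times> 'a \<Rightarrow> 'k"
  assume fs: "fin_supp_on f (A \<times> B)" and t0: "tsum sc (\<lambda>a b. a * b) f = 0"
  define T where "T = {p. f p \<noteq> 0}"
  have T: "finite T" "T \<subseteq> A \<times> B" using fs unfolding fin_supp_on_def T_def by auto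
  define Rel where "Rel = tensor_rels sc (scalars sc) A B"
  define al where "al q = (\<Sum>p\<in>T. sc (f p * kap q (snd p)) (fst p))" for q
  have D: "(\<lambda>x. ind p x - (\<Sum>q\<in>Q. kap q (snd p) * ind (fst p, psi q) x)) \<in> fspan Rel"
    if p: "p \<in> T" for p
  proof -
    obtain a b where ab: "p = (a, b)" "a \<in> A" "b \<in> B" using p T by auto
    have eb: "(\<Sum>q\<in>Q. sc (kap q b) (psi q)) = b" using expB ab by auto
    have "(\<lambda>x. ind (a, \<Sum>q\<in>Q. sc (kap q b) (psi q)) x - (\<Sum>q\<in>Q. kap q b * ind (a, psi q) x)) \<in> fspan Rel"
      unfolding Rel_def by (rule slot2[OF A B Q ab(2)]) (use psi in auto)
    then show ?thesis unfolding eb ab by simp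
  qed
  have S3: "(\<lambda>x. f x - (\<Sum>p\<in>T. f p * (\<Sum>q\<in>Q. kap q (snd p) * ind (fst p, psi q) x))) \<in> fspan Rel"
  proof -
    have "(\<lambda>x. \<Sum>p\<in>T. f p * (ind p x - (\<Sum>q\<in>Q. kap q (snd p) * ind (fst p, psi q) x))) \<in> fspan Rel"
      by (intro fspan_sum fspan_smult D T(1))
    then show ?thesis
    proof (rule fspan_eq)
      fix x
      have "f x = (\<Sum>p\<in>T. f p * ind p x)" unfolding T_def
        by (rule f_as_sum) (use T(1) in \<open>simp add: T_def\<close>)
      then show "(\<Sum>p\<in>T. f p * (ind p x - (\<Sum>q\<in>Q. kap q (snd p) * ind (fst p, psi q) x))) =
          f x - (\<Sum>p\<in>T. f p * (\<Sum>q\<in>Q. kap q (snd p) * ind (fst p, psi q) x))"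
        by (simp add: right_diff_distrib sum_subtractf)
    qed
  qed
  have S4: "(\<lambda>x. (\<Sum>p\<in>T. (f p * kap q (snd p)) * ind (fst p, psi q) x) - ind (al q, psi q) x) \<in> fspan Rel"
    if q: "q \<in> Q" for q
  proof -
    have "(\<lambda>x. ind (\<Sum>p\<in>T. sc (f p * kap q (snd p)) (fst p), psi q) x - (\<Sum>p\<in>T. (f p * kap q (snd p)) * ind (fst p, psi q) x)) \<in> fspan Rel"
      unfolding Rel_def by (rule slot1[OF A B T(1)]) (use psi q T(2) in auto)
    then have "(\<lambda>x. - (ind (al q, psi q) x - (\<Sum>p\<in>T. (f p * kap q (snd p)) * ind (fst p, psi q) x))) \<in> fspan Rel"
      unfolding al_def by (rule fspan_neg)
    then show ?thesis by (rule fspan_eq) simp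
  qed
  have S5: "al q = 0" if q: "q \<in> Q" for q
  proof -
    have tf: "tsum sc (\<lambda>a b. a * b) f = (\<Sum>p\<in>T. sc (f p) (fst p * snd p))"
      unfolding tsum_def T_def by simp
    have inC: "sc (f p) (fst p * snd p) \<in> C" if "p \<in> T" for p
      using that T(2) phiC by (intro subalg_sc[OF C]) auto
    have g0: "g q 0 = 0" using additive_zero[OF C] gadd q by blast
    have "g q (\<Sum>p\<in>T. sc (f p) (fst p * snd p)) = (\<Sum>p\<in>T. g q (sc (f p) (fst p * snd p)))"
      by (rule additive_sum[OF C]) (use gadd q inC in auto)
    also have "\<dots> = (\<Sum>p\<in>T. sc (f p) (sc (kap q (snd p)) (fst p)))"
    proof (rule sum.cong)
      fix p assume p: "p \<in> T"
      then have "fst p \<in> A" "snd p \<in> B" using T(2) by auto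
      then show "g q (sc (f p) (fst p * snd p)) = sc (f p) (sc (kap q (snd p)) (fst p))"
        using gsc gprod q phiC by simp
    qed simp
    also have "\<dots> = al q" unfolding al_def by simp
    finally show ?thesis using t0 tf g0 by simp
  qed
  have S6: "(\<lambda>x. \<Sum>q\<in>Q. ind (al q, psi q) x) \<in> fspan Rel"
    using Q
  proof (intro fspan_sum)
    fix q assume q: "q \<in> Q"
    show "ind (al q, psi q) \<in> fspan Rel" unfolding S5[OF q] Rel_def
      by (rule ind_0_1) (use psi q A in auto)
  qed
  have "(\<lambda>x. (f x - (\<Sum>p\<in>T. f p * (\<Sum>q\<in>Q. kap q (snd p) * ind (fst p, psi q) x)))
      + (\<Sum>q\<in>Q. (\<Sum>p\<in>T. (f p * kap q (snd p)) * ind (fst p, psi q) x) - ind (al q, psi q) x)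
      + (\<Sum>q\<in>Q. ind (al q, psi q) x)) \<in> fspan Rel"
    by (intro fspan_add S3 S6 fspan_sum[OF Q] S4)
  then show "f \<in> fspan (tensor_rels sc (scalars sc) A B)"
    unfolding Rel_def[symmetric]
  proof (rule fspan_eq)
    fix x
    have "(\<Sum>p\<in>T. f p * (\<Sum>q\<in>Q. kap q (snd p) * ind (fst p, psi q) x)) =
        (\<Sum>q\<in>Q. \<Sum>p\<in>T. (f p * kap q (snd p)) * ind (fst p, psi q) x)"
      by (simp add: sum_distrib_left mult.assoc sum.swap[of _ T Q])
    then show "(f x - (\<Sum>p\<in>T. f p * (\<Sum>q\<in>Q. kap q (snd p) * ind (fst p, psi q) x)))
      + (\<Sum>q\<in>Q. (\<Sum>p\<in>T. (f p * kap q (snd p)) * ind (fst p, psi q) x) - ind (al q, psi q) x)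
      + (\<Sum>q\<in>Q. ind (al q, psi q) x) = f x"
      by (simp add: sum_subtractf)
  qed
qed

lemma iso_expand1:
  assumes A: "subalg sc A" and B: "subalg sc B" and C: "subalg sc C"
    and phiC: "\<forall>b\<in>B. \<forall>a\<in>A. b * a \<in> C"
    and Q: "finite Q" and psi: "\<forall>q\<in>Q. psi q \<in> B"
    and exp: "\<forall>c\<in>C. (\<forall>q\<in>Q. g q c \<in> A) \<and> c = (\<Sum>q\<in>Q. psi q * g q c)"
    and expB: "\<forall>b\<in>B. b = (\<Sum>q\<in>Q. sc (kap q b) (psi q))"
    and gprod: "\<forall>q\<in>Q. \<forall>b\<in>B. \<forall>a\<in>A. g q (b * a) = sc (kap q b) a"
    and gadd: "\<forall>q\<in>Q. \<forall>u\<in>C. \<forall>v\<in>C. g q (u + v) = g q u + g q v"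
    and gsc: "\<forall>q\<in>Q. \<forall>c. \<forall>u\<in>C. g q (sc c u) = sc c (g q u)"
  shows "tensor_iso sc (scalars sc) B A C (\<lambda>a b. a * b)"
  unfolding tensor_iso_def
proof (intro conjI allI impI ballI)
  fix f :: "'a \<times> 'a \<Rightarrow> 'k"
  assume "fin_supp_on f (B \<times> A)"
  moreover have "\<forall>b\<in>B. \<forall>a\<in>A. (\<lambda>a b. a * b) b a \<in> C" using phiC by simp
  ultimately show "tsum sc (\<lambda>a b. a * b) f \<in> C" by (intro tsum_in[OF C])
next
  fix g assume "g \<in> tensor_rels sc (scalars sc) B A"
  then show "tsum sc (\<lambda>a b. a * b) g = 0"
    by (rule rels_zero)
next
  fix c assume c: "c \<in> C"
  let ?u = "\<lambda>q. (psi q, g q c)"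
  let ?f = "\<lambda>x. \<Sum>q\<in>Q. ind (?u q) x :: 'k"
  have "{x. ?f x \<noteq> 0} \<subseteq> ?u ` Q" by (rule supp_sum_ind)
  moreover have "?u ` Q \<subseteq> B \<times> A" using exp c psi by auto
  ultimately have fs: "fin_supp_on ?f (B \<times> A)"
    unfolding fin_supp_on_def using Q by (auto intro: finite_subset)
  have "tsum sc (\<lambda>a b. a * b) ?f = (\<Sum>q\<in>Q. psi q * g q c)"
    using tsum_sum_ind[OF Q, where phi="\<lambda>a b. a * b" and u="?u"] by simp
  also have "\<dots> = c" using exp c by simp
  finally show "\<exists>f. fin_supp_on f (B \<times> A) \<and> c = tsum sc (\<lambda>a b. a * b) f"
    using fs by metis
next
  fix f :: "'a \<times> 'a \<Rightarrow> 'k"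
  assume fs: "fin_supp_on f (B \<times> A)" and t0: "tsum sc (\<lambda>a b. a * b) f = 0"
  define T where "T = {p. f p \<noteq> 0}"
  have T: "finite T" "T \<subseteq> B \<times> A" using fs unfolding fin_supp_on_def T_def by auto
  define Rel where "Rel = tensor_rels sc (scalars sc) B A"
  define al where "al q = (\<Sum>p\<in>T. sc (f p * kap q (fst p)) (snd p))" for q
  have D: "(\<lambda>x. ind p x - (\<Sum>q\<in>Q. kap q (fst p) * ind (psi q, snd p) x)) \<in> fspan Rel"
    if p: "p \<in> T" for p
  proof -
    obtain b a where ab: "p = (b, a)" "b \<in> B" "a \<in> A" using p T by auto
    have eb: "(\<Sum>q\<in>Q. sc (kap q b) (psi q)) = b" using expB ab by auto
    have "(\<lambda>x. ind (\<Sum>q\<in>Q. sc (kap q b) (psi q), a) x - (\<Sum>q\<in>Q. kap q b * ind (psi q, a) x)) \<in> fspan Rel"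
      unfolding Rel_def by (rule slot1[OF B A Q ab(3)]) (use psi in auto)
    then show ?thesis unfolding eb ab by simp
  qed
  have S3: "(\<lambda>x. f x - (\<Sum>p\<in>T. f p * (\<Sum>q\<in>Q. kap q (fst p) * ind (psi q, snd p) x))) \<in> fspan Rel"
  proof -
    have "(\<lambda>x. \<Sum>p\<in>T. f p * (ind p x - (\<Sum>q\<in>Q. kap q (fst p) * ind (psi q, snd p) x))) \<in> fspan Rel"
      by (intro fspan_sum fspan_smult D T(1))
    then show ?thesis
    proof (rule fspan_eq)
      fix x
      have "f x = (\<Sum>p\<in>T. f p * ind p x)" unfolding T_def
        by (rule f_as_sum) (use T(1) in \<open>simp add: T_def\<close>)
      then show "(\<Sum>p\<in>T. f p * (ind p x - (\<Sum>q\<in>Q. kap q (fst p) * ind (psi q, snd p) x))) =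
          f x - (\<Sum>p\<in>T. f p * (\<Sum>q\<in>Q. kap q (fst p) * ind (psi q, snd p) x))"
        by (simp add: right_diff_distrib sum_subtractf)
    qed
  qed
  have S4: "(\<lambda>x. (\<Sum>p\<in>T. (f p * kap q (fst p)) * ind (psi q, snd p) x) - ind (psi q, al q) x) \<in> fspan Rel"
    if q: "q \<in> Q" for q
  proof -
    have "(\<lambda>x. ind (psi q, \<Sum>p\<in>T. sc (f p * kap q (fst p)) (snd p)) x - (\<Sum>p\<in>T. (f p * kap q (fst p)) * ind (psi q, snd p) x)) \<in> fspan Rel"
      unfolding Rel_def by (rule slot2[OF B A T(1)]) (use psi q T(2) in auto)
    then have "(\<lambda>x. - (ind (psi q, al q) x - (\<Sum>p\<in>T. (f p * kap q (fst p)) * ind (psi q, snd p) x))) \<in> fspan Rel"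
      unfolding al_def by (rule fspan_neg)
    then show ?thesis by (rule fspan_eq) simp
  qed
  have S5: "al q = 0" if q: "q \<in> Q" for q
  proof -
    have tf: "tsum sc (\<lambda>a b. a * b) f = (\<Sum>p\<in>T. sc (f p) (fst p * snd p))"
      unfolding tsum_def T_def by simp
    have inC: "sc (f p) (fst p * snd p) \<in> C" if "p \<in> T" for p
      using that T(2) phiC by (intro subalg_sc[OF C]) auto
    have g0: "g q 0 = 0" using additive_zero[OF C] gadd q by blast
    have "g q (\<Sum>p\<in>T. sc (f p) (fst p * snd p)) = (\<Sum>p\<in>T. g q (sc (f p) (fst p * snd p)))"
      by (rule additive_sum[OF C]) (use gadd q inC in auto)
    also have "\<dots> = (\<Sum>p\<in>T. sc (f p) (sc (kap q (fst p)) (snd p)))"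
    proof (rule sum.cong)
      fix p assume p: "p \<in> T"
      then have "fst p \<in> B" "snd p \<in> A" using T(2) by auto
      then show "g q (sc (f p) (fst p * snd p)) = sc (f p) (sc (kap q (fst p)) (snd p))"
        using gsc gprod q phiC by simp
    qed simp
    also have "\<dots> = al q" unfolding al_def by simp
    finally show ?thesis using t0 tf g0 by simp
  qed
  have S6: "(\<lambda>x. \<Sum>q\<in>Q. ind (psi q, al q) x) \<in> fspan Rel"
    using Q
  proof (intro fspan_sum)
    fix q assume q: "q \<in> Q"
    show "ind (psi q, al q) \<in> fspan Rel" unfolding S5[OF q] Rel_def
      by (rule ind_0_2) (use psi q A in auto)
  qed
  have "(\<lambda>x. (f x - (\<Sum>p\<in>T. f p * (\<Sum>q\<in>Q. kap q (fst p) * ind (psi q, snd p) x)))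
      + (\<Sum>q\<in>Q. (\<Sum>p\<in>T. (f p * kap q (fst p)) * ind (psi q, snd p) x) - ind (psi q, al q) x)
      + (\<Sum>q\<in>Q. ind (psi q, al q) x)) \<in> fspan Rel"
    by (intro fspan_add S3 S6 fspan_sum[OF Q] S4)
  then show "f \<in> fspan (tensor_rels sc (scalars sc) B A)"
    unfolding Rel_def[symmetric]
  proof (rule fspan_eq)
    fix x
    have "(\<Sum>p\<in>T. f p * (\<Sum>q\<in>Q. kap q (fst p) * ind (psi q, snd p) x)) =
        (\<Sum>q\<in>Q. \<Sum>p\<in>T. (f p * kap q (fst p)) * ind (psi q, snd p) x)"
      by (simp add: sum_distrib_left mult.assoc sum.swap[of _ T Q])
    then show "(f x - (\<Sum>p\<in>T. f p * (\<Sum>q\<in>Q. kap q (fst p) * ind (psi q, snd p) x)))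
      + (\<Sum>q\<in>Q. (\<Sum>p\<in>T. (f p * kap q (fst p)) * ind (psi q, snd p) x) - ind (psi q, al q) x)
      + (\<Sum>q\<in>Q. ind (psi q, al q) x) = f x"
      by (simp add: sum_subtractf)
  qed
qed

end

locale bcon = kalg sc for sc :: "'k::field \<Rightarrow> 'a::ring_1 \<Rightarrow> 'a" +
  fixes S R :: "'a set" and ES :: "'a \<Rightarrow> 'a" and lam :: 'k and n :: nat and x y :: "nat \<Rightarrow> 'a"
    and e :: 'a and R1 :: "'a set" and ER :: "'a \<Rightarrow> 'a"
  assumes subS: "subalg sc S" and subR: "subalg sc R" and SR: "S \<subseteq> R"
    and ss: "strongly_separable sc S R ES lam n x y"
    and bc: "basic_construction sc S R ES lam e R1 ER"
begin

lemma ES_in: "r \<in> R \<Longrightarrow> ES r \<in> S"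
  using ss unfolding strongly_separable_def bimod_map_def by blast
lemma ES_bimod: "s \<in> S \<Longrightarrow> r \<in> R \<Longrightarrow> s' \<in> S \<Longrightarrow> ES (s * r * s') = s * ES r * s'"
  using ss unfolding strongly_separable_def bimod_map_def by blast
lemma xy_in: "i < n \<Longrightarrow> x i \<in> R" "i < n \<Longrightarrow> y i \<in> R"
  using ss unfolding strongly_separable_def by blast+
lemma dual1: "m \<in> R \<Longrightarrow> (\<Sum>i<n. ES (m * x i) * y i) = m"
  using ss unfolding strongly_separable_def by blast
lemma dual2: "m \<in> R \<Longrightarrow> (\<Sum>i<n. x i * ES (y i * m)) = m"
  using ss unfolding strongly_separable_def by blast
lemma ES1: "ES 1 = 1" and lam0: "lam \<noteq> 0" and sumxy: "(\<Sum>i<n. x i * y i) = sc (inverse lam) 1"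
  using ss unfolding strongly_separable_def by blast+

lemma subR1: "subalg sc R1" and RR1: "R \<subseteq> R1" and e_in: "e \<in> R1"
  using bc unfolding basic_construction_def by blast+
lemma ere: "r \<in> R \<Longrightarrow> e * r * e = ES r * e"
  using bc unfolding basic_construction_def by blast
lemma tiso: "tensor_iso sc S R R R1 (\<lambda>a b. a * e * b)"
  using bc unfolding basic_construction_def by blast
lemma ER_in: "z \<in> R1 \<Longrightarrow> ER z \<in> R"
  using bc unfolding basic_construction_def by blast
lemma ER_add: "z \<in> R1 \<Longrightarrow> w \<in> R1 \<Longrightarrow> ER (z + w) = ER z + ER w"
  using bc unfolding basic_construction_def by blast
lemma ER_sc: "z \<in> R1 \<Longrightarrow> ER (sc c z) = sc c (ER z)"
  using bc unfolding basic_construction_def by blast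
lemma ER_aeb: "a \<in> R \<Longrightarrow> b \<in> R \<Longrightarrow> ER (a * e * b) = sc lam (a * b)"
  using bc unfolding basic_construction_def by blast

lemma inR1: "r \<in> R \<Longrightarrow> r \<in> R1" using RR1 by blast
lemma SR1: "s \<in> S \<Longrightarrow> s \<in> R" using SR by blast

lemma aeb_in: "a \<in> R \<Longrightarrow> b \<in> R \<Longrightarrow> a * e * b \<in> R1"
  by (intro subalg_mult[OF subR1] inR1 e_in)

lemma R1_induct[consumes 1, case_names zero add smult base]:
  assumes z: "z \<in> R1" and P0: "P 0"
    and Padd: "\<And>u v. u \<in> R1 \<Longrightarrow> v \<in> R1 \<Longrightarrow> P u \<Longrightarrow> P v \<Longrightarrow> P (u + v)"
    and Psc: "\<And>c u. u \<in> R1 \<Longrightarrow> P u \<Longrightarrow> P (sc c u)"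
    and Pb: "\<And>a b. a \<in> R \<Longrightarrow> b \<in> R \<Longrightarrow> P (a * e * b)"
  shows "P z"
proof -
  obtain f where f: "fin_supp_on f (R \<times> R)" "z = tsum sc (\<lambda>a b. a * e * b) f"
    using tiso z unfolding tensor_iso_def by blast
  define T where "T = {p. f p \<noteq> 0}"
  have T: "finite T" "T \<subseteq> R \<times> R" using f(1) unfolding fin_supp_on_def T_def by auto
  have zT: "z = (\<Sum>p\<in>T. sc (f p) (fst p * e * snd p))" using f(2) unfolding tsum_def T_def by simp
  have "\<forall>T'. T' \<subseteq> T \<longrightarrow> P (\<Sum>p\<in>T'. sc (f p) (fst p * e * snd p)) \<and> (\<Sum>p\<in>T'. sc (f p) (fst p * e * snd p)) \<in> R1"
  proof (intro allI impI)
    fix T' assume T': "T' \<subseteq> T"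
    then have "finite T'" using T(1) finite_subset by blast
    then show "P (\<Sum>p\<in>T'. sc (f p) (fst p * e * snd p)) \<and> (\<Sum>p\<in>T'. sc (f p) (fst p * e * snd p)) \<in> R1"
      using T'
    proof (induction T' rule: finite_induct)
      case empty
      then show ?case using P0 subalg_0[OF subR1] by simp
    next
      case (insert p T')
      have p: "fst p \<in> R" "snd p \<in> R" using insert T(2) by auto
      have t1: "sc (f p) (fst p * e * snd p) \<in> R1" using p by (intro subalg_sc[OF subR1] aeb_in)
      have t2: "P (sc (f p) (fst p * e * snd p))" using p by (intro Psc aeb_in Pb)
      have ih: "P (\<Sum>p\<in>T'. sc (f p) (fst p * e * snd p))" "(\<Sum>p\<in>T'. sc (f p) (fst p * e * snd p)) \<in> R1"
        using insert by auto
      show ?case using insert(1,2) t1 t2 ih Padd[OF t1 ih(2) t2 ih(1)] subalg_add[OF subR1 t1 ih(2)] by simp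
    qed
  qed
  then show ?thesis using zT by auto
qed

lemma ER_0: "ER 0 = 0"
  using ER_add[of 0 0] subalg_0[OF subR1] by simp

lemma ER_sum: "(\<And>i. i \<in> I \<Longrightarrow> h i \<in> R1) \<Longrightarrow> ER (\<Sum>i\<in>I. h i) = (\<Sum>i\<in>I. ER (h i))"
  by (rule additive_sum[OF subR1]) (auto simp: ER_add)

lemma e_comm: "s \<in> S \<Longrightarrow> s * e = e * s"
proof -
  assume s: "s \<in> S"
  have rel: "(\<lambda>p. ind (1 * s, 1) p - ind (1, s * 1) p) \<in> tensor_rels sc S R R"
    by (rule rel_bal) (use s subalg_1[OF subR] in auto)
  have "tsum sc (\<lambda>a b. a * e * b) (\<lambda>p. ind (1 * s, 1) p - ind (1, s * 1) p) = 0"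
    using tiso rel unfolding tensor_iso_def by blast
  moreover have "tsum sc (\<lambda>a b. a * e * b) (\<lambda>p. ind (1 * s, 1) p - ind (1, s * 1) p) = s * e - e * s"
    using tsum_ind2[where c=1 and phi="\<lambda>a b. a * e * b" and u="(1 * s, 1)" and v="(1, s * 1)"] by simp
  ultimately show ?thesis by simp
qed

lemma ee: "e * e = e"
  using ere[of 1] subalg_1[OF subR] ES1 by simp

lemma unit: "(\<Sum>i<n. x i * e * y i) = 1"
proof -
  let ?u = "\<Sum>i<n. x i * e * y i"
  have "?u * z = z" if z: "z \<in> R1" for z
    using z
  proof (induction rule: R1_induct)
    case zero then show ?case by simp
  next
    case (add u v) then show ?case by (simp add: distrib_left)
  next
    case (smult c u) then show ?case by simp
  next
    case (base a b)
    have "?u * (a * e * b) = (\<Sum>i<n. x i * (e * (y i * a) * e) * b)"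
      by (simp add: sum_distrib_right mult.assoc)
    also have "\<dots> = (\<Sum>i<n. x i * ES (y i * a) * e * b)"
    proof (intro sum.cong refl)
      fix i assume i: "i \<in> {..<n}"
      have h: "e * (y i * a) * e = ES (y i * a) * e"
        using base xy_in i by (intro ere subalg_mult[OF subR]) auto
      show "x i * (e * (y i * a) * e) * b = x i * ES (y i * a) * e * b"
        unfolding h by (simp add: mult.assoc)
    qed
    also have "\<dots> = (\<Sum>i<n. x i * ES (y i * a)) * e * b"
      by (simp add: sum_distrib_right)
    also have "\<dots> = a * e * b" using dual2[OF base(1)] by simp
    finally show ?case .
  qed
  from this[OF subalg_1[OF subR1]] show ?thesis by simp
qed

lemma ER_left: "z \<in> R1 \<Longrightarrow> m \<in> R \<Longrightarrow> ER (m * z) = m * ER z"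
proof -
  assume z: "z \<in> R1" and m: "m \<in> R"
  have mR1: "m \<in> R1" using m by (rule inR1)
  show ?thesis using z
  proof (induction rule: R1_induct)
    case zero then show ?case by (simp add: ER_0)
  next
    case (add u v)
    then show ?case
      by (simp add: distrib_left ER_add subalg_mult[OF subR1 mR1] distrib_left)
  next
    case (smult c u)
    then show ?case by (simp add: ER_sc subalg_mult[OF subR1 mR1])
  next
    case (base a b)
    then show ?case using ER_aeb[of "m * a" b] ER_aeb[of a b] subalg_mult[OF subR m] by (simp add: mult.assoc)
  qed
qed

lemma ER_right: "z \<in> R1 \<Longrightarrow> m \<in> R \<Longrightarrow> ER (z * m) = ER z * m"
proof -
  assume z: "z \<in> R1" and m: "m \<in> R"
  have mR1: "m \<in> R1" using m by (rule inR1)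
  show ?thesis using z
  proof (induction rule: R1_induct)
    case zero then show ?case by (simp add: ER_0)
  next
    case (add u v)
    then show ?case
      by (simp add: distrib_right ER_add subalg_mult[OF subR1 _ mR1])
  next
    case (smult c u)
    then show ?case by (simp add: ER_sc subalg_mult[OF subR1 _ mR1])
  next
    case (base a b)
    then show ?case using ER_aeb[of a "b * m"] ER_aeb[of a b] subalg_mult[OF subR _ m] by (simp add: mult.assoc)
  qed
qed


lemma sc_cancel: "sc (inverse lam) (sc lam v) = v" "sc lam (sc (inverse lam) v) = v"
  using lam0 by simp_all

lemma lam_inj: "sc lam v = 0 \<Longrightarrow> v = 0"
  using sc_cancel(1)[of v] by simp

lemma X_in: "i < n \<Longrightarrow> sc (inverse lam) (x i * e) \<in> R1"
  using xy_in by (intro subalg_sc[OF subR1] subalg_mult[OF subR1] inR1 e_in) auto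
lemma Y_in: "i < n \<Longrightarrow> e * y i \<in> R1"
  using xy_in by (intro subalg_mult[OF subR1] inR1 e_in) auto

lemma ss1_dual1: "m \<in> R1 \<Longrightarrow> (\<Sum>i<n. ER (m * sc (inverse lam) (x i * e)) * (e * y i)) = m"
proof (induction rule: R1_induct)
  case zero then show ?case by (simp add: ER_0)
next
  case (add u v)
  have "(\<Sum>i<n. ER ((u + v) * sc (inverse lam) (x i * e)) * (e * y i)) =
      (\<Sum>i<n. ER (u * sc (inverse lam) (x i * e)) * (e * y i) + ER (v * sc (inverse lam) (x i * e)) * (e * y i))"
  proof (intro sum.cong refl)
    fix i assume "i \<in> {..<n}"
    then have X: "sc (inverse lam) (x i * e) \<in> R1" by (intro X_in) auto
    show "ER ((u + v) * sc (inverse lam) (x i * e)) * (e * y i) =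
      ER (u * sc (inverse lam) (x i * e)) * (e * y i) + ER (v * sc (inverse lam) (x i * e)) * (e * y i)"
      by (simp only: distrib_right ER_add subalg_mult[OF subR1 add(1) X] subalg_mult[OF subR1 add(2) X])
  qed
  then show ?case using add by (simp add: sum.distrib)
next
  case (smult c u)
  have "(\<Sum>i<n. ER (sc c u * sc (inverse lam) (x i * e)) * (e * y i)) =
      (\<Sum>i<n. sc c (ER (u * sc (inverse lam) (x i * e)) * (e * y i)))"
  proof (intro sum.cong refl)
    fix i assume "i \<in> {..<n}"
    then have X: "sc (inverse lam) (x i * e) \<in> R1" by (intro X_in) auto
    have "sc c u * sc (inverse lam) (x i * e) = sc c (u * sc (inverse lam) (x i * e))" by (simp add: mult.commute)
    then show "ER (sc c u * sc (inverse lam) (x i * e)) * (e * y i) =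
      sc c (ER (u * sc (inverse lam) (x i * e)) * (e * y i))"
      using ER_sc[OF subalg_mult[OF subR1 smult(1) X], of c] by simp
  qed
  then show ?case using smult by (simp add: sc_sum[symmetric])
next
  case (base a b)
  have "(\<Sum>i<n. ER (a * e * b * sc (inverse lam) (x i * e)) * (e * y i)) =
      (\<Sum>i<n. a * e * (ES (b * x i) * y i))"
  proof (intro sum.cong refl)
    fix i assume "i \<in> {..<n}"
    then have xi: "x i \<in> R" "y i \<in> R" using xy_in by auto
    have bx: "b * x i \<in> R" using base xi by (intro subalg_mult[OF subR])
    have esb: "ES (b * x i) \<in> R" using ES_in[OF bx] SR by auto
    have "a * e * b * sc (inverse lam) (x i * e) = sc (inverse lam) (a * (e * (b * x i) * e))"
      by (simp add: mult.assoc)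
    also have "\<dots> = sc (inverse lam) (a * ES (b * x i) * e * 1)"
      using ere[OF bx] by (simp add: mult.assoc)
    finally have 1: "a * e * b * sc (inverse lam) (x i * e) = sc (inverse lam) (a * ES (b * x i) * e * 1)" .
    have aes: "a * ES (b * x i) \<in> R" using base esb by (intro subalg_mult[OF subR])
    have 2: "ER (a * e * b * sc (inverse lam) (x i * e)) = a * ES (b * x i)"
      unfolding 1 using ER_sc[OF aeb_in[OF aes subalg_1[OF subR]]] ER_aeb[OF aes subalg_1[OF subR]]
      by (simp add: lam0)
    have 3: "ES (b * x i) * e = e * ES (b * x i)" using e_comm ES_in[OF bx] by simp
    show "ER (a * e * b * sc (inverse lam) (x i * e)) * (e * y i) = a * e * (ES (b * x i) * y i)"
    proof -
      have "a * ES (b * x i) * (e * y i) = a * (ES (b * x i) * e) * y i" by (simp add: mult.assoc)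
      also have "\<dots> = a * (e * ES (b * x i)) * y i" by (simp only: 3)
      also have "\<dots> = a * e * (ES (b * x i) * y i)" by (simp add: mult.assoc)
      finally show ?thesis unfolding 2 .
    qed
  qed
  also have "\<dots> = a * e * (\<Sum>i<n. ES (b * x i) * y i)" by (simp add: sum_distrib_left)
  also have "\<dots> = a * e * b" using dual1[OF base(2)] by simp
  finally show ?case .
qed

lemma ss1_dual2: "m \<in> R1 \<Longrightarrow> (\<Sum>i<n. sc (inverse lam) (x i * e) * ER ((e * y i) * m)) = m"
proof (induction rule: R1_induct)
  case zero then show ?case by (simp add: ER_0)
next
  case (add u v)
  have "(\<Sum>i<n. sc (inverse lam) (x i * e) * ER ((e * y i) * (u + v))) =
      (\<Sum>i<n. sc (inverse lam) (x i * e) * ER ((e * y i) * u) + sc (inverse lam) (x i * e) * ER ((e * y i) * v))"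
  proof (intro sum.cong refl)
    fix i assume "i \<in> {..<n}"
    then have Y: "e * y i \<in> R1" by (intro Y_in) auto
    show "sc (inverse lam) (x i * e) * ER ((e * y i) * (u + v)) =
      sc (inverse lam) (x i * e) * ER ((e * y i) * u) + sc (inverse lam) (x i * e) * ER ((e * y i) * v)"
      by (simp only: distrib_left ER_add subalg_mult[OF subR1 Y add(1)] subalg_mult[OF subR1 Y add(2)])
  qed
  then show ?case using add by (simp add: sum.distrib)
next
  case (smult c u)
  have "(\<Sum>i<n. sc (inverse lam) (x i * e) * ER ((e * y i) * sc c u)) =
      (\<Sum>i<n. sc c (sc (inverse lam) (x i * e) * ER ((e * y i) * u)))"
  proof (intro sum.cong refl)
    fix i assume "i \<in> {..<n}"
    then have Y: "e * y i \<in> R1" by (intro Y_in) auto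
    have "(e * y i) * sc c u = sc c ((e * y i) * u)" by simp
    then show "sc (inverse lam) (x i * e) * ER ((e * y i) * sc c u) =
      sc c (sc (inverse lam) (x i * e) * ER ((e * y i) * u))"
      using ER_sc[OF subalg_mult[OF subR1 Y smult(1)], of c] by (simp add: mult.commute)
  qed
  then show ?case using smult by (simp add: sc_sum[symmetric]) (metis sc_sc)
next
  case (base a b)
  have "(\<Sum>i<n. sc (inverse lam) (x i * e) * ER ((e * y i) * (a * e * b))) =
      (\<Sum>i<n. x i * ES (y i * a)) * e * b"
    unfolding sum_distrib_right
  proof (intro sum.cong refl)
    fix i assume "i \<in> {..<n}"
    then have xi: "x i \<in> R" "y i \<in> R" using xy_in by auto
    have ya: "y i * a \<in> R" using base xi by (intro subalg_mult[OF subR])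
    have esy: "ES (y i * a) \<in> R" using ES_in[OF ya] SR by auto
    have "(e * y i) * (a * e * b) = (e * (y i * a) * e) * b" by (simp add: mult.assoc)
    also have "\<dots> = ES (y i * a) * e * b" using ere[OF ya] by simp
    finally have 1: "ER ((e * y i) * (a * e * b)) = sc lam (ES (y i * a) * b)"
      using ER_aeb[OF esy base(2)] by simp
    have 3: "ES (y i * a) * e = e * ES (y i * a)" using e_comm ES_in[OF ya] by simp
    have "sc (inverse lam) (x i * e) * ER ((e * y i) * (a * e * b)) = x i * (e * ES (y i * a)) * b"
      unfolding 1 by (simp add: lam0 mult.assoc)
    also have "\<dots> = x i * ES (y i * a) * e * b" unfolding 3[symmetric] by (simp add: mult.assoc)
    finally show "sc (inverse lam) (x i * e) * ER ((e * y i) * (a * e * b)) = x i * ES (y i * a) * e * b" .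
  qed
  also have "\<dots> = a * e * b" using dual2[OF base(1)] by simp
  finally show ?case .
qed

lemma ER1: "ER 1 = 1"
proof -
  have "ER 1 = ER (\<Sum>i<n. x i * e * y i)" using unit by simp
  also have "\<dots> = (\<Sum>i<n. ER (x i * e * y i))"
    using xy_in by (intro ER_sum aeb_in) auto
  also have "\<dots> = (\<Sum>i<n. sc lam (x i * y i))"
    using xy_in by (intro sum.cong refl ER_aeb) auto
  also have "\<dots> = sc lam (\<Sum>i<n. x i * y i)" by (simp add: sc_sum)
  also have "\<dots> = 1" using sumxy by (simp add: lam0)
  finally show ?thesis .
qed

lemma ss1: "strongly_separable sc R R1 ER lam n (\<lambda>i. sc (inverse lam) (x i * e)) (\<lambda>i. e * y i)"
  unfolding strongly_separable_def
proof (intro conjI allI impI ballI)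
  show "bimod_map sc R R1 ER"
    unfolding bimod_map_def
  proof (intro conjI allI impI ballI)
    fix r assume "r \<in> R1" then show "ER r \<in> R" by (rule ER_in)
  next
    fix r r' assume "r \<in> R1" "r' \<in> R1" then show "ER (r + r') = ER r + ER r'" by (rule ER_add)
  next
    fix c r assume "r \<in> R1" then show "ER (sc c r) = sc c (ER r)" by (rule ER_sc)
  next
    fix s r s' assume s: "s \<in> R" and r: "r \<in> R1" and s': "s' \<in> R"
    have sr: "s * r \<in> R1" by (rule subalg_mult[OF subR1 inR1[OF s] r])
    show "ER (s * r * s') = s * ER r * s'" using ER_right[OF sr s'] ER_left[OF r s] by simp
  qed
next
  fix i assume "i < n" then show "sc (inverse lam) (x i * e) \<in> R1" by (rule X_in)
next
  fix i assume "i < n" then show "e * y i \<in> R1" by (rule Y_in)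
next
  fix m assume "m \<in> R1" then show "(\<Sum>i<n. ER (m * sc (inverse lam) (x i * e)) * (e * y i)) = m"
    by (rule ss1_dual1)
next
  fix m assume "m \<in> R1" then show "(\<Sum>i<n. sc (inverse lam) (x i * e) * ER ((e * y i) * m)) = m"
    by (rule ss1_dual2)
next
  show "ER 1 = 1" by (rule ER1)
next
  show "lam \<noteq> 0" by (rule lam0)
next
  have "(\<Sum>i<n. sc (inverse lam) (x i * e) * (e * y i)) = sc (inverse lam) (\<Sum>i<n. x i * (e * e) * y i)"
    by (simp add: sc_sum mult.assoc)
  also have "\<dots> = sc (inverse lam) 1" using unit by (simp add: ee)
  finally show "(\<Sum>i<n. sc (inverse lam) (x i * e) * (e * y i)) = sc (inverse lam) 1" .
qed

lemma ze_form: "z \<in> R1 \<Longrightarrow> \<exists>w\<in>R. z * e = w * e"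
proof (induction rule: R1_induct)
  case zero then show ?case using subalg_0[OF subR] by (intro bexI[of _ 0]) auto
next
  case (add u v)
  then obtain w1 w2 where "w1 \<in> R" "u * e = w1 * e" "w2 \<in> R" "v * e = w2 * e" by blast
  then show ?case by (intro bexI[of _ "w1 + w2"]) (auto simp: distrib_right intro: subalg_add[OF subR])
next
  case (smult c u)
  then obtain w1 where "w1 \<in> R" "u * e = w1 * e" by blast
  then show ?case by (intro bexI[of _ "sc c w1"]) (auto intro: subalg_sc[OF subR])
next
  case (base a b)
  have "a * e * b * e = a * (e * b * e)" by (simp add: mult.assoc)
  also have "\<dots> = (a * ES b) * e" using ere[OF base(2)] by (simp add: mult.assoc)
  finally show ?case using base ES_in[OF base(2)] SR by (intro bexI[of _ "a * ES b"]) (auto intro: subalg_mult[OF subR])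
qed

lemma irr:
  assumes irred: "cent R S = scalars sc"
  shows "cent R1 R = scalars sc"
proof
  show "scalars sc \<subseteq> cent R1 R" by (rule scalars_cent[OF subR1])
next
  show "cent R1 R \<subseteq> scalars sc"
  proof
    fix z assume zc: "z \<in> cent R1 R"
    have z: "z \<in> R1" using zc by (rule centR)
    obtain w where w: "w \<in> R" "z * e = w * e" using ze_form[OF z] by blast
    have wc: "w \<in> cent R S"
    proof (rule centI[OF w(1)])
      fix s assume s: "s \<in> S"
      have sR: "s \<in> R" using s SR by auto
      have c1: "z * e * s = s * z * e"
      proof -
        have "z * e * s = z * (e * s)" by (simp add: mult.assoc)
        also have "\<dots> = z * (s * e)" using e_comm[OF s] by simp
        also have "\<dots> = (z * s) * e" by (simp add: mult.assoc)
        also have "\<dots> = (s * z) * e" using centD[OF zc sR] by simp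
        finally show ?thesis .
      qed
      have a1: "w * s * e = s * z * e"
      proof -
        have "w * s * e = w * (s * e)" by (simp add: mult.assoc)
        also have "\<dots> = w * (e * s)" using e_comm[OF s] by simp
        also have "\<dots> = (w * e) * s" by (simp add: mult.assoc)
        also have "\<dots> = z * e * s" using w(2) by simp
        finally show ?thesis using c1 by simp
      qed
      have a2: "s * w * e = s * z * e" using w(2) by (simp add: mult.assoc)
      have "(w * s - s * w) * e = w * s * e - s * w * e" by (simp add: algebra_simps)
      then have "(w * s - s * w) * e = 0" using a1 a2 by simp
      then have "ER ((w * s - s * w) * e * 1) = 0" using ER_0 by simp
      moreover have wsR: "w * s - s * w \<in> R" using w(1) sR by (intro subalg_diff[OF subR] subalg_mult[OF subR])
      ultimately have "sc lam ((w * s - s * w) * 1) = 0" using ER_aeb[OF wsR subalg_1[OF subR]] by simp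
      then have "sc lam (w * s - s * w) = 0" by simp
      then have "w * s - s * w = 0" by (rule lam_inj)
      then show "w * s = s * w" by simp
    qed
    then obtain c where c: "w = sc c 1" using irred unfolding scalars_def by auto
    have "z = z * (\<Sum>i<n. x i * e * y i)" using unit by simp
    also have "\<dots> = (\<Sum>i<n. x i * (z * e) * y i)"
      unfolding sum_distrib_left
    proof (intro sum.cong refl)
      fix i assume "i \<in> {..<n}"
      then have "x i \<in> R" using xy_in by auto
      then have "z * x i = x i * z" using centD[OF zc] by simp
      then show "z * (x i * e * y i) = x i * (z * e) * y i" by (simp add: mult.assoc[symmetric])
    qed
    also have "\<dots> = sc c (\<Sum>i<n. x i * e * y i)" unfolding w(2) c by (simp add: sc_sum)
    also have "\<dots> = sc c 1" using unit by simp
    finally show "z \<in> scalars sc" unfolding scalars_def by auto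
  qed
qed

end

locale rfbl = kalg sc for sc :: "'k::field \<Rightarrow> 'a::ring_1 \<Rightarrow> 'a" +
  fixes R R1 :: "'a set" and ER :: "'a \<Rightarrow> 'a" and lam :: 'k and n :: nat and X Y :: "nat \<Rightarrow> 'a"
    and Q T :: "'a set"
  assumes subR: "subalg sc R" and subR1: "subalg sc R1" and RR1: "R \<subseteq> R1"
    and ss: "strongly_separable sc R R1 ER lam n X Y"
    and rfb: "right_free_basis R R1 Q" and TR: "T \<subseteq> R" and QT: "Q \<subseteq> cent R1 T"
begin

lemma ER_in: "z \<in> R1 \<Longrightarrow> ER z \<in> R"
  using ss unfolding strongly_separable_def bimod_map_def by blast
lemma ER_add: "z \<in> R1 \<Longrightarrow> w \<in> R1 \<Longrightarrow> ER (z + w) = ER z + ER w"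
  using ss unfolding strongly_separable_def bimod_map_def by blast
lemma ER_sc: "z \<in> R1 \<Longrightarrow> ER (sc c z) = sc c (ER z)"
  using ss unfolding strongly_separable_def bimod_map_def by blast
lemma ER_bimod: "s \<in> R \<Longrightarrow> r \<in> R1 \<Longrightarrow> s' \<in> R \<Longrightarrow> ER (s * r * s') = s * ER r * s'"
  using ss unfolding strongly_separable_def bimod_map_def by blast
lemma ER_left: "s \<in> R \<Longrightarrow> r \<in> R1 \<Longrightarrow> ER (s * r) = s * ER r"
  using ER_bimod[of s r 1] subalg_1[OF subR] by simp
lemma ER_right: "r \<in> R1 \<Longrightarrow> s' \<in> R \<Longrightarrow> ER (r * s') = ER r * s'"
  using ER_bimod[of 1 r s'] subalg_1[OF subR] by simp
lemma XY_in: "i < n \<Longrightarrow> X i \<in> R1" "i < n \<Longrightarrow> Y i \<in> R1"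
  using ss unfolding strongly_separable_def by blast+
lemma dual1: "m \<in> R1 \<Longrightarrow> (\<Sum>i<n. ER (m * X i) * Y i) = m"
  using ss unfolding strongly_separable_def by blast
lemma dual2: "m \<in> R1 \<Longrightarrow> (\<Sum>i<n. X i * ER (Y i * m)) = m"
  using ss unfolding strongly_separable_def by blast
lemma ER_sum: "(\<And>i. i \<in> I \<Longrightarrow> h i \<in> R1) \<Longrightarrow> ER (\<Sum>i\<in>I. h i) = (\<Sum>i\<in>I. ER (h i))"
  by (rule additive_sum[OF subR1]) (auto simp: ER_add)

lemma inR1: "r \<in> R \<Longrightarrow> r \<in> R1" using RR1 by blast
lemma mult_in: "u \<in> R1 \<Longrightarrow> r \<in> R \<Longrightarrow> u * r \<in> R1"
  using RR1 subalg_mult[OF subR1] by blast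

lemma QR1: "q \<in> Q \<Longrightarrow> q \<in> R1" using rfb unfolding right_free_basis_def by blast
lemma TQ: "q \<in> Q \<Longrightarrow> t \<in> T \<Longrightarrow> q * t = t * q" using QT centD by blast

definition valid :: "'a \<Rightarrow> ('a \<Rightarrow> 'a) \<Rightarrow> bool" where
  "valid z h \<longleftrightarrow> (\<forall>q. h q \<in> R) \<and> (\<forall>q. q \<notin> Q \<longrightarrow> h q = 0) \<and> finite {q. h q \<noteq> 0} \<and>
     z = (\<Sum>q\<in>{q. h q \<noteq> 0}. q * h q)"

definition co :: "'a \<Rightarrow> 'a \<Rightarrow> 'a" where
  "co z = (THE h. valid z h)"

lemma ex1_valid: "z \<in> R1 \<Longrightarrow> \<exists>!h. valid z h"
  using rfb unfolding right_free_basis_def valid_def by blast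

lemma co_valid: "z \<in> R1 \<Longrightarrow> valid z (co z)"
  unfolding co_def by (rule theI'[OF ex1_valid])

lemma co_unique: "z \<in> R1 \<Longrightarrow> valid z h \<Longrightarrow> co z = h"
  using co_valid ex1_valid by blast

lemma co_char:
  assumes z: "z \<in> R1" and hR: "\<And>q. h q \<in> R" and hQ: "\<And>q. q \<notin> Q \<Longrightarrow> h q = 0"
    and U: "finite U" "{q. h q \<noteq> 0} \<subseteq> U" and zU: "z = (\<Sum>q\<in>U. q * h q)"
  shows "co z = h"
proof (rule co_unique[OF z])
  have fin: "finite {q. h q \<noteq> 0}" using U finite_subset by blast
  have "(\<Sum>q\<in>{q. h q \<noteq> 0}. q * h q) = (\<Sum>q\<in>U. q * h q)"
    by (rule sum.mono_neutral_left) (use U in auto)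
  then show "valid z h" unfolding valid_def using hR hQ fin zU by auto
qed

lemma co_R: "z \<in> R1 \<Longrightarrow> co z q \<in> R"
  using co_valid unfolding valid_def by blast
lemma co_out: "z \<in> R1 \<Longrightarrow> q \<notin> Q \<Longrightarrow> co z q = 0"
  using co_valid unfolding valid_def by blast
lemma co_fin: "z \<in> R1 \<Longrightarrow> finite {q. co z q \<noteq> 0}"
  using co_valid unfolding valid_def by blast

lemma co_rep:
  assumes z: "z \<in> R1" and U: "finite U" "{q. co z q \<noteq> 0} \<subseteq> U"
  shows "z = (\<Sum>q\<in>U. q * co z q)"
proof -
  have "z = (\<Sum>q\<in>{q. co z q \<noteq> 0}. q * co z q)" using co_valid[OF z] unfolding valid_def by blast
  also have "\<dots> = (\<Sum>q\<in>U. q * co z q)"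
    by (rule sum.mono_neutral_left) (use U in auto)
  finally show ?thesis .
qed

lemma co_sum:
  assumes J: "finite J" and zr: "\<And>j. j \<in> J \<Longrightarrow> z j \<in> R1" "\<And>j. j \<in> J \<Longrightarrow> r j \<in> R"
  shows "co (\<Sum>j\<in>J. z j * r j) = (\<lambda>q. \<Sum>j\<in>J. co (z j) q * r j)"
proof (rule co_char)
  show "(\<Sum>j\<in>J. z j * r j) \<in> R1"
    using zr by (intro subalg_sum[OF subR1] mult_in) auto
next
  fix q show "(\<Sum>j\<in>J. co (z j) q * r j) \<in> R"
    using zr by (intro subalg_sum[OF subR] subalg_mult[OF subR] co_R) auto
next
  fix q assume "q \<notin> Q" then show "(\<Sum>j\<in>J. co (z j) q * r j) = 0"
    using zr co_out by simp
next
  let ?U = "\<Union>j\<in>J. {q. co (z j) q \<noteq> 0}"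
  show "finite ?U" using J zr co_fin by blast
  show "{q. (\<Sum>j\<in>J. co (z j) q * r j) \<noteq> 0} \<subseteq> ?U"
  proof
    fix q assume "q \<in> {q. (\<Sum>j\<in>J. co (z j) q * r j) \<noteq> 0}"
    then have "(\<Sum>j\<in>J. co (z j) q * r j) \<noteq> 0" by simp
    then obtain j where j: "j \<in> J" "co (z j) q * r j \<noteq> 0" by (meson sum.neutral)
    then have "co (z j) q \<noteq> 0" by (metis mult_zero_left)
    then show "q \<in> ?U" using j(1) by blast
  qed
  have "(\<Sum>j\<in>J. z j * r j) = (\<Sum>j\<in>J. (\<Sum>q\<in>?U. q * co (z j) q) * r j)"
  proof (rule sum.cong[OF refl])
    fix j assume j: "j \<in> J"
    have "z j = (\<Sum>q\<in>?U. q * co (z j) q)"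
      by (rule co_rep) (use zr j J co_fin in auto)
    then show "z j * r j = (\<Sum>q\<in>?U. q * co (z j) q) * r j" by simp
  qed
  also have "\<dots> = (\<Sum>q\<in>?U. q * (\<Sum>j\<in>J. co (z j) q * r j))"
    by (simp add: sum_distrib_right sum_distrib_left mult.assoc sum.swap[of _ J])
  finally show "(\<Sum>j\<in>J. z j * r j) = (\<Sum>q\<in>?U. q * (\<Sum>j\<in>J. co (z j) q * r j))" .
qed

lemma Q_fin: "finite Q"
proof -
  let ?U = "\<Union>i\<in>{..<n}. {q. co (X i) q \<noteq> 0}"
  have finU: "finite ?U" using co_fin XY_in by blast
  have "Q \<subseteq> ?U"
  proof
    fix q0 assume q0: "q0 \<in> Q"
    have q0R1: "q0 \<in> R1" by (rule QR1[OF q0])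
    have c1: "co q0 = (\<lambda>q. if q = q0 then 1 else 0)"
    proof (rule co_char[OF q0R1])
      fix q show "(if q = q0 then 1 else 0) \<in> R" using subalg_1[OF subR] subalg_0[OF subR] by simp
    next
      fix q assume "q \<notin> Q" then show "(if q = q0 then 1 else 0) = (0::'a)" using q0 by auto
    next
      show "finite {q0}" by simp
      show "{q. (if q = q0 then 1 else 0) \<noteq> (0::'a)} \<subseteq> {q0}" by auto
      show "q0 = (\<Sum>q\<in>{q0}. q * (if q = q0 then 1 else 0))" by simp
    qed
    have "q0 = (\<Sum>i<n. X i * ER (Y i * q0))" using dual2[OF q0R1] by simp
    then have "co q0 = co (\<Sum>i<n. X i * ER (Y i * q0))" by simp
    also have "\<dots> = (\<lambda>q. \<Sum>i<n. co (X i) q * ER (Y i * q0))"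
      using XY_in q0R1 by (intro co_sum) (auto intro: ER_in subalg_mult[OF subR1])
    finally have "1 = (\<Sum>i<n. co (X i) q0 * ER (Y i * q0))" using c1 by (metis (mono_tags))
    then have "(\<Sum>i<n. co (X i) q0 * ER (Y i * q0)) \<noteq> 0" by (metis one_neq_zero)
    then obtain i where i: "i \<in> {..<n}" "co (X i) q0 * ER (Y i * q0) \<noteq> 0" by (meson sum.neutral)
    then have "co (X i) q0 \<noteq> 0" by (metis mult_zero_left)
    then show "q0 \<in> ?U" using i(1) by blast
  qed
  then show ?thesis using finU finite_subset by blast
qed

lemma co_expand: "z \<in> R1 \<Longrightarrow> z = (\<Sum>q\<in>Q. q * co z q)"
  using co_rep[OF _ Q_fin] co_out by blast

lemma co_uniqQ:
  assumes "z \<in> R1" "\<And>q. h q \<in> R" "\<And>q. q \<notin> Q \<Longrightarrow> h q = 0" "z = (\<Sum>q\<in>Q. q * h q)"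
  shows "co z = h"
  by (rule co_char[OF assms(1,2,3) Q_fin _ assms(4)]) (use assms(3) in auto)

lemma co_add: "u \<in> R1 \<Longrightarrow> v \<in> R1 \<Longrightarrow> co (u + v) q = co u q + co v q"
proof -
  assume u: "u \<in> R1" and v: "v \<in> R1"
  have "co (u + v) = (\<lambda>q. co u q + co v q)"
  proof (rule co_uniqQ)
    show "u + v \<in> R1" using u v by (rule subalg_add[OF subR1])
    fix q show "co u q + co v q \<in> R" using u v by (intro subalg_add[OF subR] co_R)
  next
    fix q assume "q \<notin> Q" then show "co u q + co v q = 0" using u v co_out by simp
  next
    show "u + v = (\<Sum>q\<in>Q. q * (co u q + co v q))"
      using co_expand[OF u] co_expand[OF v] by (simp add: distrib_left sum.distrib)
  qed
  then show ?thesis by simp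
qed

lemma co_sc: "u \<in> R1 \<Longrightarrow> co (sc c u) q = sc c (co u q)"
proof -
  assume u: "u \<in> R1"
  have "co (sc c u) = (\<lambda>q. sc c (co u q))"
  proof (rule co_uniqQ)
    show "sc c u \<in> R1" using u by (rule subalg_sc[OF subR1])
    fix q show "sc c (co u q) \<in> R" using u by (intro subalg_sc[OF subR] co_R)
  next
    fix q assume "q \<notin> Q" then show "sc c (co u q) = 0" using u co_out by simp
  next
    show "sc c u = (\<Sum>q\<in>Q. q * sc c (co u q))"
      using co_expand[OF u] by (metis (no_types, lifting) sc_mult_right sc_sum sum.cong)
  qed
  then show ?thesis by simp
qed

lemma co_rmul: "u \<in> R1 \<Longrightarrow> r \<in> R \<Longrightarrow> co (u * r) q = co u q * r"
proof -
  assume u: "u \<in> R1" and r: "r \<in> R"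
  have "co (u * r) = (\<lambda>q. co u q * r)"
  proof (rule co_uniqQ)
    show "u * r \<in> R1" by (rule mult_in[OF u r])
    fix q show "co u q * r \<in> R" using u r by (intro subalg_mult[OF subR] co_R)
  next
    fix q assume "q \<notin> Q" then show "co u q * r = 0" using u co_out by simp
  next
    have "u * r = (\<Sum>q\<in>Q. q * co u q) * r" using co_expand[OF u] by simp
    then show "u * r = (\<Sum>q\<in>Q. q * (co u q * r))" by (simp add: sum_distrib_right mult.assoc)
  qed
  then show ?thesis by simp
qed

lemma co_lmul: "u \<in> R1 \<Longrightarrow> t \<in> T \<Longrightarrow> co (t * u) q = t * co u q"
proof -
  assume u: "u \<in> R1" and t: "t \<in> T"
  have tR: "t \<in> R" using t TR by auto
  have "co (t * u) = (\<lambda>q. t * co u q)"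
  proof (rule co_uniqQ)
    show "t * u \<in> R1" by (rule subalg_mult[OF subR1 inR1[OF tR] u])
    fix q show "t * co u q \<in> R" using u tR by (intro subalg_mult[OF subR] co_R)
  next
    fix q assume "q \<notin> Q" then show "t * co u q = 0" using u co_out by simp
  next
    have "t * u = t * (\<Sum>q\<in>Q. q * co u q)" using co_expand[OF u] by simp
    also have "\<dots> = (\<Sum>q\<in>Q. (t * q) * co u q)" by (simp add: sum_distrib_left mult.assoc)
    also have "\<dots> = (\<Sum>q\<in>Q. q * (t * co u q))"
      by (intro sum.cong refl) (simp add: TQ[OF _ t, symmetric] mult.assoc)
    finally show "t * u = (\<Sum>q\<in>Q. q * (t * co u q))" .
  qed
  then show ?thesis by simp
qed

definition psi :: "'a \<Rightarrow> 'a" where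
  "psi q = (\<Sum>i<n. co (X i) q * Y i)"

lemma psi_R1: "psi q \<in> R1"
  unfolding psi_def using XY_in
  by (intro subalg_sum[OF subR1] subalg_mult[OF subR1 inR1[OF co_R]]) auto

lemma left_expand: "z \<in> R1 \<Longrightarrow> z = (\<Sum>q\<in>Q. ER (z * q) * psi q)"
proof -
  assume z: "z \<in> R1"
  have "(\<Sum>q\<in>Q. ER (z * q) * psi q) = (\<Sum>i<n. \<Sum>q\<in>Q. ER (z * q) * co (X i) q * Y i)"
    unfolding psi_def by (simp add: sum_distrib_left mult.assoc sum.swap[of _ Q])
  also have "\<dots> = (\<Sum>i<n. ER (z * X i) * Y i)"
  proof (intro sum.cong refl)
    fix i assume "i \<in> {..<n}"
    then have Xi: "X i \<in> R1" using XY_in by auto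
    have "(\<Sum>q\<in>Q. ER (z * q) * co (X i) q * Y i) = (\<Sum>q\<in>Q. ER (z * q * co (X i) q)) * Y i"
    proof -
      have "(\<Sum>q\<in>Q. ER (z * q) * co (X i) q * Y i) = (\<Sum>q\<in>Q. ER (z * q * co (X i) q) * Y i)"
        using z QR1 co_R[OF Xi] by (intro sum.cong refl) (simp add: ER_right subalg_mult[OF subR1])
      then show ?thesis by (simp add: sum_distrib_right)
    qed
    also have "(\<Sum>q\<in>Q. ER (z * q * co (X i) q)) = ER (\<Sum>q\<in>Q. z * q * co (X i) q)"
      by (rule ER_sum[symmetric]) (rule mult_in[OF subalg_mult[OF subR1 z QR1] co_R[OF Xi]], simp)
    also have "(\<Sum>q\<in>Q. z * q * co (X i) q) = z * X i"
    proof -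
      have "(\<Sum>q\<in>Q. z * q * co (X i) q) = z * (\<Sum>q\<in>Q. q * co (X i) q)"
        by (simp add: sum_distrib_left mult.assoc)
      then show ?thesis using co_expand[OF Xi, symmetric] by simp
    qed
    finally show "(\<Sum>q\<in>Q. ER (z * q) * co (X i) q * Y i) = ER (z * X i) * Y i" .
  qed
  also have "\<dots> = z" by (rule dual1[OF z])
  finally show ?thesis by simp
qed

lemma psi_cent: "q \<in> Q \<Longrightarrow> psi q \<in> cent R1 T"
proof (rule centI[OF psi_R1])
  fix t assume t: "t \<in> T"
  have tR: "t \<in> R" using t TR by auto
  have tR1: "t \<in> R1" using tR by (rule inR1)
  have "psi q * t = (\<Sum>j<n. co (X j) q * (Y j * t))" unfolding psi_def by (simp add: sum_distrib_right mult.assoc)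
  also have "\<dots> = (\<Sum>j<n. co (X j) q * (\<Sum>i<n. ER (Y j * t * X i) * Y i))"
    using XY_in tR1 by (intro sum.cong refl) (simp add: dual1 subalg_mult[OF subR1])
  also have "\<dots> = (\<Sum>j<n. \<Sum>i<n. co (X j) q * ER (Y j * (t * X i)) * Y i)"
    by (simp add: sum_distrib_left mult.assoc)
  also have "\<dots> = (\<Sum>i<n. \<Sum>j<n. co (X j) q * ER (Y j * (t * X i)) * Y i)"
    by (rule sum.swap)
  also have "\<dots> = (\<Sum>i<n. (\<Sum>j<n. co (X j) q * ER (Y j * (t * X i))) * Y i)"
    by (simp add: sum_distrib_right)
  also have "\<dots> = (\<Sum>i<n. co (\<Sum>j<n. X j * ER (Y j * (t * X i))) q * Y i)"
  proof (intro sum.cong refl)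
    fix i assume "i \<in> {..<n}"
    then have tX: "t * X i \<in> R1" using XY_in tR1 by (intro subalg_mult[OF subR1]) auto
    have "co (\<Sum>j<n. X j * ER (Y j * (t * X i))) = (\<lambda>q. \<Sum>j<n. co (X j) q * ER (Y j * (t * X i)))"
      using XY_in tX by (intro co_sum) (auto intro: ER_in subalg_mult[OF subR1])
    then show "(\<Sum>j<n. co (X j) q * ER (Y j * (t * X i))) * Y i = co (\<Sum>j<n. X j * ER (Y j * (t * X i))) q * Y i"
      by simp
  qed
  also have "\<dots> = (\<Sum>i<n. co (t * X i) q * Y i)"
    using XY_in tR1 by (intro sum.cong refl) (simp add: dual2 subalg_mult[OF subR1])
  also have "\<dots> = (\<Sum>i<n. t * (co (X i) q * Y i))"
    using XY_in t by (intro sum.cong refl) (simp add: co_lmul mult.assoc)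
  also have "\<dots> = t * psi q" unfolding psi_def by (simp add: sum_distrib_left)
  finally show "psi q * t = t * psi q" by simp
qed

end

theorem lemma3p4:
  fixes sc :: "'k::field \<Rightarrow> 'a::ring_1 \<Rightarrow> 'a"
    and N M M1 M2 :: "'a set"
    and E EM EM1 :: "'a \<Rightarrow> 'a"
    and e1 e2 :: 'a
    and lam :: 'k
    and n :: nat and x y :: "nat \<Rightarrow> 'a"
  assumes alg: "k_algebra sc"
    and subN: "subalg sc N" and subM: "subalg sc M" and NM: "N \<subseteq> M"
    and irred: "cent M N = scalars sc"
    and sep: "strongly_separable sc N M E lam n x y"
    and bc1: "basic_construction sc N M E lam e1 M1 EM"
    and bc2: "basic_construction sc M M1 EM lam e2 M2 EM1"
    and depth2: "\<exists>P. P \<subseteq> cent M1 N \<and> right_free_basis M M1 P"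
                "\<exists>Q. Q \<subseteq> cent M2 M \<and> right_free_basis M1 M2 Q"
  shows "tensor_iso sc (scalars sc) (cent M1 N) (cent M2 M) (cent M2 N) (\<lambda>a b. a * b) \<and>
         tensor_iso sc (scalars sc) (cent M2 M) (cent M1 N) (cent M2 N) (\<lambda>b a. b * a)"
proof -
  interpret K: kalg sc by unfold_locales (rule alg)
  interpret B1: bcon sc N M E lam n x y e1 M1 EM
    by unfold_locales (rule subN subM NM sep bc1)+
  define X1 where "X1 = (\<lambda>i. sc (inverse lam) (x i * e1))"
  define Y1 where "Y1 = (\<lambda>i. e1 * y i)"
  have ss1: "strongly_separable sc M M1 EM lam n X1 Y1"
    unfolding X1_def Y1_def by (rule B1.ss1)
  interpret B2: bcon sc M M1 EM lam n X1 Y1 e2 M2 EM1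
    by unfold_locales (rule subM B1.subR1 B1.RR1 ss1 bc2)+
  define X2 where "X2 = (\<lambda>i. sc (inverse lam) (X1 i * e2))"
  define Y2 where "Y2 = (\<lambda>i. e2 * Y1 i)"
  have ss2: "strongly_separable sc M1 M2 EM1 lam n X2 Y2"
    unfolding X2_def Y2_def by (rule B2.ss1)
  obtain Q where Q: "Q \<subseteq> cent M2 M" "right_free_basis M1 M2 Q" using depth2(2) by blast
  interpret RB: rfbl sc M1 M2 EM1 lam n X2 Y2 Q M
    by unfold_locales (rule B1.subR1 B2.subR1 B2.RR1 ss2 Q(2) B1.RR1 Q(1))+
  define A where "A = cent M1 N"
  define B where "B = cent M2 M"
  define C where "C = cent M2 N"
  have irr1: "cent M1 M = scalars sc" by (rule B1.irr[OF irred])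
  have NM1: "N \<subseteq> M1" using NM B1.RR1 by auto
  have MM1: "M \<subseteq> M1" using B1.RR1 by auto
  have M1M2: "M1 \<subseteq> M2" using B2.RR1 by auto
  have subA: "subalg sc A" unfolding A_def by (rule K.subalg_cent[OF B1.subR1])
  have subB: "subalg sc B" unfolding B_def by (rule K.subalg_cent[OF B2.subR1])
  have subC: "subalg sc C" unfolding C_def by (rule K.subalg_cent[OF B2.subR1])
  have AM2: "a \<in> A \<Longrightarrow> a \<in> M2" for a using M1M2 unfolding A_def cent_def by auto
  have AM1: "a \<in> A \<Longrightarrow> a \<in> M1" for a unfolding A_def cent_def by auto
  have BM2: "b \<in> B \<Longrightarrow> b \<in> M2" for b unfolding B_def cent_def by auto
  have CM2: "c \<in> C \<Longrightarrow> c \<in> M2" for c unfolding C_def cent_def by auto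
  have Acomm: "a \<in> A \<Longrightarrow> \<nu> \<in> N \<Longrightarrow> a * \<nu> = \<nu> * a" for a \<nu> unfolding A_def cent_def by auto
  have Bcomm: "b \<in> B \<Longrightarrow> m \<in> M \<Longrightarrow> b * m = m * b" for b m unfolding B_def cent_def by auto
  have Ccomm: "c \<in> C \<Longrightarrow> \<nu> \<in> N \<Longrightarrow> c * \<nu> = \<nu> * c" for c \<nu> unfolding C_def cent_def by auto
  have QB: "q \<in> Q \<Longrightarrow> q \<in> B" for q using Q(1) unfolding B_def by auto
  have QM2: "q \<in> Q \<Longrightarrow> q \<in> M2" for q using QB BM2 by auto
  have BC: "B \<subseteq> C" unfolding B_def C_def using NM by (rule K.cent_mono[OF order_refl])
  have phiAB: "\<forall>a\<in>A. \<forall>b\<in>B. a * b \<in> C"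
  proof (intro ballI)
    fix a b assume a: "a \<in> A" and b: "b \<in> B"
    show "a * b \<in> C" unfolding C_def
    proof (rule K.centI)
      show "a * b \<in> M2" using a b AM2 BM2 by (intro K.subalg_mult[OF B2.subR1])
      fix \<nu> assume \<nu>: "\<nu> \<in> N"
      have "a * b * \<nu> = a * (\<nu> * b)" using Bcomm[OF b] \<nu> NM by (auto simp: mult.assoc)
      also have "\<dots> = \<nu> * (a * b)" using Acomm[OF a \<nu>] by (simp add: mult.assoc[symmetric])
      finally show "a * b * \<nu> = \<nu> * (a * b)" .
    qed
  qed
  have phiBA: "\<forall>b\<in>B. \<forall>a\<in>A. b * a \<in> C"
  proof (intro ballI)
    fix a b assume a: "a \<in> A" and b: "b \<in> B"
    have "b \<in> C" "a \<in> C" using b BC a AM2 Acomm unfolding C_def cent_def by auto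
    then show "b * a \<in> C" by (rule K.subalg_mult[OF subC])
  qed
  have scal_ex: "z \<in> cent M1 M \<Longrightarrow> z = sc (SOME c. z = sc c 1) 1" for z
    using irr1 unfolding scalars_def by (metis (mono_tags, lifting) imageE someI_ex)
  have iso1: "tensor_iso sc (scalars sc) A B C (\<lambda>a b. a * b)"
  proof (rule K.iso_expand2[OF subA subB subC phiAB RB.Q_fin,
        where psi = RB.psi and g = "\<lambda>q z. EM1 (z * q)" and kap = "\<lambda>q b. SOME c. EM1 (b * q) = sc c 1"])
    show "\<forall>q\<in>Q. RB.psi q \<in> B" using RB.psi_cent unfolding B_def by blast
  next
    show "\<forall>c\<in>C. (\<forall>q\<in>Q. EM1 (c * q) \<in> A) \<and> c = (\<Sum>q\<in>Q. EM1 (c * q) * RB.psi q)"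
    proof (intro ballI conjI)
      fix c q assume c: "c \<in> C" and q: "q \<in> Q"
      have cq: "c * q \<in> M2" using c q CM2 QM2 by (intro K.subalg_mult[OF B2.subR1])
      show "EM1 (c * q) \<in> A" unfolding A_def
      proof (rule K.centI)
        show "EM1 (c * q) \<in> M1" by (rule RB.ER_in[OF cq])
        fix \<nu> assume \<nu>: "\<nu> \<in> N"
        have \<nu>1: "\<nu> \<in> M1" using \<nu> NM1 by auto
        have "EM1 (c * q) * \<nu> = EM1 (c * q * \<nu>)" using RB.ER_right[OF cq \<nu>1] by simp
        also have "c * q * \<nu> = \<nu> * (c * q)"
        proof -
          have q\<nu>: "q * \<nu> = \<nu> * q" using Bcomm[OF QB[OF q]] \<nu> NM by auto
          have "c * q * \<nu> = c * (q * \<nu>)" by (simp add: mult.assoc)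
          also have "\<dots> = (c * \<nu>) * q" by (simp add: q\<nu> mult.assoc)
          also have "\<dots> = \<nu> * (c * q)" by (simp add: Ccomm[OF c \<nu>] mult.assoc)
          finally show ?thesis .
        qed
        also have "EM1 (\<nu> * (c * q)) = \<nu> * EM1 (c * q)" by (rule RB.ER_left[OF \<nu>1 cq])
        finally show "EM1 (c * q) * \<nu> = \<nu> * EM1 (c * q)" .
      qed
    next
      fix c assume c: "c \<in> C"
      show "c = (\<Sum>q\<in>Q. EM1 (c * q) * RB.psi q)" by (rule RB.left_expand[OF CM2[OF c]])
    qed
  next
    have cent: "EM1 (b * q) \<in> cent M1 M" if b: "b \<in> B" and q: "q \<in> Q" for b q
    proof (rule K.centI)
      have bq: "b * q \<in> M2" using b q BM2 QM2 by (intro K.subalg_mult[OF B2.subR1])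
      show "EM1 (b * q) \<in> M1" by (rule RB.ER_in[OF bq])
      fix m assume m: "m \<in> M"
      have m1: "m \<in> M1" using m MM1 by auto
      have "EM1 (b * q) * m = EM1 (b * q * m)" using RB.ER_right[OF bq m1] by simp
      also have "b * q * m = m * (b * q)"
        using Bcomm[OF QB[OF q] m] Bcomm[OF b m] by (simp add: mult.assoc) (simp add: mult.assoc[symmetric])
      also have "EM1 (m * (b * q)) = m * EM1 (b * q)" by (rule RB.ER_left[OF m1 bq])
      finally show "EM1 (b * q) * m = m * EM1 (b * q)" .
    qed
    show "\<forall>b\<in>B. b = (\<Sum>q\<in>Q. sc (SOME c. EM1 (b * q) = sc c 1) (RB.psi q))"
    proof
      fix b assume b: "b \<in> B"
      have "b = (\<Sum>q\<in>Q. EM1 (b * q) * RB.psi q)" by (rule RB.left_expand[OF BM2[OF b]])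
      also have "\<dots> = (\<Sum>q\<in>Q. sc (SOME c. EM1 (b * q) = sc c 1) (RB.psi q))"
      proof (rule sum.cong[OF refl])
        fix q assume q: "q \<in> Q"
        have "EM1 (b * q) = sc (SOME c. EM1 (b * q) = sc c 1) 1" by (rule scal_ex[OF cent[OF b q]])
        then show "EM1 (b * q) * RB.psi q = sc (SOME c. EM1 (b * q) = sc c 1) (RB.psi q)"
          by (metis K.sc_mult_left mult_1_left)
      qed
      finally show "b = (\<Sum>q\<in>Q. sc (SOME c. EM1 (b * q) = sc c 1) (RB.psi q))" .
    qed
    show "\<forall>q\<in>Q. \<forall>a\<in>A. \<forall>b\<in>B. EM1 (a * b * q) = sc (SOME c. EM1 (b * q) = sc c 1) a"
    proof (intro ballI)
      fix q a b assume q: "q \<in> Q" and a: "a \<in> A" and b: "b \<in> B"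
      have bq: "b * q \<in> M2" using b q BM2 QM2 by (intro K.subalg_mult[OF B2.subR1])
      have "EM1 (a * b * q) = a * EM1 (b * q)"
        using RB.ER_left[OF AM1[OF a] bq] by (simp add: mult.assoc)
      also have "EM1 (b * q) = sc (SOME c. EM1 (b * q) = sc c 1) 1" by (rule scal_ex[OF cent[OF b q]])
      finally show "EM1 (a * b * q) = sc (SOME c. EM1 (b * q) = sc c 1) a" by simp
    qed
  next
    show "\<forall>q\<in>Q. \<forall>u\<in>C. \<forall>v\<in>C. EM1 ((u + v) * q) = EM1 (u * q) + EM1 (v * q)"
      using CM2 QM2 by (auto simp: distrib_right intro!: RB.ER_add K.subalg_mult[OF B2.subR1])
  next
    show "\<forall>q\<in>Q. \<forall>c. \<forall>u\<in>C. EM1 (sc c u * q) = sc c (EM1 (u * q))"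
      using CM2 QM2 by (auto intro!: RB.ER_sc K.subalg_mult[OF B2.subR1])
  qed
  have iso2: "tensor_iso sc (scalars sc) B A C (\<lambda>a b. a * b)"
  proof (rule K.iso_expand1[OF subA subB subC phiBA RB.Q_fin,
        where psi = "\<lambda>q. q" and g = "\<lambda>q z. RB.co z q" and kap = "\<lambda>q b. SOME c. RB.co b q = sc c 1"])
    show "\<forall>q\<in>Q. q \<in> B" using QB by blast
  next
    show "\<forall>c\<in>C. (\<forall>q\<in>Q. RB.co c q \<in> A) \<and> c = (\<Sum>q\<in>Q. q * RB.co c q)"
    proof (intro ballI conjI)
      fix c q assume c: "c \<in> C" and q: "q \<in> Q"
      have c2: "c \<in> M2" by (rule CM2[OF c])
      show "RB.co c q \<in> A" unfolding A_def
      proof (rule K.centI)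
        show "RB.co c q \<in> M1" by (rule RB.co_R[OF c2])
        fix \<nu> assume \<nu>: "\<nu> \<in> N"
        have \<nu>1: "\<nu> \<in> M1" using \<nu> NM1 by auto
        have \<nu>M: "\<nu> \<in> M" using \<nu> NM by auto
        have "RB.co c q * \<nu> = RB.co (c * \<nu>) q" by (rule RB.co_rmul[OF c2 \<nu>1, symmetric])
        also have "c * \<nu> = \<nu> * c" by (rule Ccomm[OF c \<nu>])
        also have "RB.co (\<nu> * c) q = \<nu> * RB.co c q" by (rule RB.co_lmul[OF c2 \<nu>M])
        finally show "RB.co c q * \<nu> = \<nu> * RB.co c q" .
      qed
    next
      fix c assume c: "c \<in> C"
      show "c = (\<Sum>q\<in>Q. q * RB.co c q)" by (rule RB.co_expand[OF CM2[OF c]])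
    qed
  next
    have cent: "RB.co b q \<in> cent M1 M" if b: "b \<in> B" for b q
    proof (rule K.centI)
      have b2: "b \<in> M2" by (rule BM2[OF b])
      show "RB.co b q \<in> M1" by (rule RB.co_R[OF b2])
      fix m assume m: "m \<in> M"
      have m1: "m \<in> M1" using m MM1 by auto
      have "RB.co b q * m = RB.co (b * m) q" by (rule RB.co_rmul[OF b2 m1, symmetric])
      also have "b * m = m * b" by (rule Bcomm[OF b m])
      also have "RB.co (m * b) q = m * RB.co b q" by (rule RB.co_lmul[OF b2 m])
      finally show "RB.co b q * m = m * RB.co b q" .
    qed
    show "\<forall>b\<in>B. b = (\<Sum>q\<in>Q. sc (SOME c. RB.co b q = sc c 1) q)"
    proof
      fix b assume b: "b \<in> B"
      have "b = (\<Sum>q\<in>Q. q * RB.co b q)" by (rule RB.co_expand[OF BM2[OF b]])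
      also have "\<dots> = (\<Sum>q\<in>Q. sc (SOME c. RB.co b q = sc c 1) q)"
      proof (rule sum.cong[OF refl])
        fix q assume q: "q \<in> Q"
        have "RB.co b q = sc (SOME c. RB.co b q = sc c 1) 1" by (rule scal_ex[OF cent[OF b]])
        then show "q * RB.co b q = sc (SOME c. RB.co b q = sc c 1) q"
          by (metis K.sc_mult_right mult_1_right)
      qed
      finally show "b = (\<Sum>q\<in>Q. sc (SOME c. RB.co b q = sc c 1) q)" .
    qed
    show "\<forall>q\<in>Q. \<forall>b\<in>B. \<forall>a\<in>A. RB.co (b * a) q = sc (SOME c. RB.co b q = sc c 1) a"
    proof (intro ballI)
      fix q a b assume q: "q \<in> Q" and a: "a \<in> A" and b: "b \<in> B"
      have "RB.co (b * a) q = RB.co b q * a" by (rule RB.co_rmul[OF BM2[OF b] AM1[OF a]])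
      also have "RB.co b q = sc (SOME c. RB.co b q = sc c 1) 1" by (rule scal_ex[OF cent[OF b]])
      finally show "RB.co (b * a) q = sc (SOME c. RB.co b q = sc c 1) a" by simp
    qed
  next
    show "\<forall>q\<in>Q. \<forall>u\<in>C. \<forall>v\<in>C. RB.co (u + v) q = RB.co u q + RB.co v q"
      using CM2 by (auto intro!: RB.co_add)
  next
    show "\<forall>q\<in>Q. \<forall>c. \<forall>u\<in>C. RB.co (sc c u) q = sc c (RB.co u q)"
      using CM2 by (auto intro!: RB.co_sc)
  qed
  show ?thesis using iso1 iso2 unfolding A_def B_def C_def by simp
qed


end
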